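(* Let $(\Omega,\mathcal F)$ be a measurable space and $\mathcal P$ a Hahn-localizable family of probability measures on $\mathcal F$ (not necessarily convex). Then $\mathrm{ca}(\mathrm{co}(\mathcal P))'$ is isometrically isomorphic to $\mathbb L^\infty(\mathcal P)$.
   Context: $\mathrm{co}(\mathcal P)$ is the convex hull of $\mathcal P$. A set is $\mathcal P$-polar if it is contained in some $N\in\mathcal F$ with $P(N)=0$ for all $P\in\mathcal P$; $\mathcal P$-q.s. means outside a $\mathcal P$-polar set. $\mathbb L^\infty(\mathcal P)$ is the space of $\mathcal F$-measurable real functions bounded $\mathcal P$-q.s., modulo $\mathcal P$-q.s. equality, with norm $\|f\|=\inf\{M>0:|f|\le M\ \mathcal P\text{-q.s.}\}$. For a family $\mathcal R$, $\mathrm{ca}(\mathcal R)$ is the set of finite signed measures $\mu$ on $\mathcal F$ with $|\mu|\ll R$ for some $R\in\mathcal R$, with the total variation norm. For families $\mathcal P,\mathcal Q$, $\mathcal P\lll\mathcal Q$ means every $P\in\mathcal P$ satisfies $P\ll Q$ for some $Q\in\mathcal Q$; $\mathrm{sconv}(\mathcal Q)$ is the set of countable convex combinations of elements of $\mathcal Q$. $\mathcal P$ is pre-Hahn-localizable if there are a family $\mathcal Q$ of probability measures on $\mathcal F$ and sets $S_Q\in\mathcal F$ with $Q(S_R)=\delta_{QR}$ ($Q,R\in\mathcal Q$) and $\mathcal Q\lll\mathcal P\lll\mathrm{sconv}(\mathcal Q)$; it is Hahn-localizable if moreover this can be arranged so that for every family $E_Q\in\mathcal F$, $E_Q\subseteq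 S_Q$, there is $S\in\mathcal F$ with $Q(E_Q\setminus S)=0$ for all $Q\in\mathcal Q$, and such that any $F\in\mathcal F$ with $Q(E_Q\setminus F)=0$ for all $Q$ satisfies $Q(S\setminus F)=0$ for all $Q\in\mathcal Q$. *)

theory Defs
  imports "HOL-Analysis.Analysis"
begin

text \<open>Measures are represented as real-valued set functions on the measurable
space M (only sets M and space M are used); they vanish outside sets M.\<close>

definition signed_measure :: "'a measure \<Rightarrow> ('a set \<Rightarrow> real) \<Rightarrow> bool" where
  "signed_measure M \<mu> \<longleftrightarrow>
     (\<forall>A. A \<notin> sets M \<longrightarrow> \<mu> A = 0) \<and>
     (\<forall>A::nat \<Rightarrow> 'a set. disjoint_family A \<longrightarrow> range A \<subseteq> sets M \<longrightarrow>
        (\<lambda>n. \<mu> (A n)) sums \<mu> (\<Union>n. A n))"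

definition prob_measure :: "'a measure \<Rightarrow> ('a set \<Rightarrow> real) \<Rightarrow> bool" where
  "prob_measure M \<mu> \<longleftrightarrow> signed_measure M \<mu> \<and> (\<forall>A\<in>sets M. 0 \<le> \<mu> A) \<and> \<mu> (space M) = 1"

text \<open>\<open>|\<mu>| \<ll> R\<close>: the total variation of \<mu> vanishes on R-null sets,
i.e. \<mu> vanishes on all measurable subsets of R-null sets.\<close>
definition abs_cont :: "'a measure \<Rightarrow> ('a set \<Rightarrow> real) \<Rightarrow> ('a set \<Rightarrow> real) \<Rightarrow> bool" where
  "abs_cont M \<mu> R \<longleftrightarrow> (\<forall>A\<in>sets M. R A = 0 \<longrightarrow> (\<forall>B\<in>sets M. B \<subseteq> A \<longrightarrow> \<mu> B = 0))"

definition tv_norm :: "'a measure \<Rightarrow> ('a set \<Rightarrow> real) \<Rightarrow> real" where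
  "tv_norm M \<mu> = Sup {(\<Sum>A\<in>\<A>. \<bar>\<mu> A\<bar>) | \<A>. finite \<A> \<and> \<A> \<subseteq> sets M \<and> disjoint \<A>}"

definition dominated :: "'a measure \<Rightarrow> ('a set \<Rightarrow> real) set \<Rightarrow> ('a set \<Rightarrow> real) set \<Rightarrow> bool" where
  "dominated M \<P> \<Q> \<longleftrightarrow> (\<forall>P\<in>\<P>. \<exists>Q\<in>\<Q>. abs_cont M P Q)"

definition mconv :: "('a set \<Rightarrow> real) set \<Rightarrow> ('a set \<Rightarrow> real) set" where
  "mconv \<P> = {(\<lambda>A. \<Sum>i<n. c i * p i A) | (n::nat) c p.
             (\<forall>i<n. 0 \<le> c i \<and> p i \<in> \<P>) \<and> (\<Sum>i<n. c i) = 1}"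

definition sconv :: "('a set \<Rightarrow> real) set \<Rightarrow> ('a set \<Rightarrow> real) set" where
  "sconv \<Q> = {(\<lambda>A. \<Sum>i. c i * q i A) | c q.
             (\<forall>i. 0 \<le> c i \<and> q i \<in> \<Q>) \<and> c sums 1}"

definition hahn_localizable :: "'a measure \<Rightarrow> ('a set \<Rightarrow> real) set \<Rightarrow> bool" where
  "hahn_localizable M \<P> \<longleftrightarrow>
    (\<exists>\<Q> S. (\<forall>Q\<in>\<Q>. prob_measure M Q) \<and> (\<forall>Q\<in>\<Q>. S Q \<in> sets M) \<and>
       (\<forall>Q\<in>\<Q>. \<forall>R\<in>\<Q>. Q (S R) = (if Q = R then 1 else 0)) \<and>
       dominated M \<Q> \<P> \<and> dominated M \<P> (sconv \<Q>) \<and>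
       (\<forall>E. (\<forall>Q\<in>\<Q>. E Q \<in> sets M \<and> E Q \<subseteq> S Q) \<longrightarrow>
          (\<exists>S'\<in>sets M. (\<forall>Q\<in>\<Q>. Q (E Q - S') = 0) \<and>
             (\<forall>F\<in>sets M. (\<forall>Q\<in>\<Q>. Q (E Q - F) = 0) \<longrightarrow> (\<forall>Q\<in>\<Q>. Q (S' - F) = 0)))))"

definition qs :: "'a measure \<Rightarrow> ('a set \<Rightarrow> real) set \<Rightarrow> ('a \<Rightarrow> bool) \<Rightarrow> bool" where
  "qs M \<P> \<phi> \<longleftrightarrow> (\<exists>N\<in>sets M. (\<forall>P\<in>\<P>. P N = 0) \<and> {x\<in>space M. \<not> \<phi> x} \<subseteq> N)"

text \<open>Representatives of elements of \<open>L\<^sup>\<infinity>(\<P>)\<close> and the norm.\<close>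
definition Linf :: "'a measure \<Rightarrow> ('a set \<Rightarrow> real) set \<Rightarrow> ('a \<Rightarrow> real) set" where
  "Linf M \<P> = {f. f \<in> borel_measurable M \<and> (\<exists>C. qs M \<P> (\<lambda>x. \<bar>f x\<bar> \<le> C))}"

definition Linf_norm :: "'a measure \<Rightarrow> ('a set \<Rightarrow> real) set \<Rightarrow> ('a \<Rightarrow> real) \<Rightarrow> real" where
  "Linf_norm M \<P> f = Inf {C. 0 < C \<and> qs M \<P> (\<lambda>x. \<bar>f x\<bar> \<le> C)}"

definition ca :: "'a measure \<Rightarrow> ('a set \<Rightarrow> real) set \<Rightarrow> ('a set \<Rightarrow> real) set" where
  "ca M \<R> = {\<mu>. signed_measure M \<mu> \<and> (\<exists>R\<in>\<R>. abs_cont M \<mu> R)}"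

definition ca_dual :: "'a measure \<Rightarrow> ('a set \<Rightarrow> real) set \<Rightarrow> (('a set \<Rightarrow> real) \<Rightarrow> real) \<Rightarrow> bool" where
  "ca_dual M \<R> \<Lambda> \<longleftrightarrow>
     (\<forall>\<mu>\<in>ca M \<R>. \<forall>\<nu>\<in>ca M \<R>. \<forall>a b. \<Lambda> (\<lambda>A. a * \<mu> A + b * \<nu> A) = a * \<Lambda> \<mu> + b * \<Lambda> \<nu>) \<and>
     (\<exists>C. \<forall>\<mu>\<in>ca M \<R>. \<bar>\<Lambda> \<mu>\<bar> \<le> C * tv_norm M \<mu>)"

definition dual_norm :: "'a measure \<Rightarrow> ('a set \<Rightarrow> real) set \<Rightarrow> (('a set \<Rightarrow> real) \<Rightarrow> real) \<Rightarrow> real" where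
  "dual_norm M \<R> \<Lambda> = Inf {C. 0 \<le> C \<and> (\<forall>\<mu>\<in>ca M \<R>. \<bar>\<Lambda> \<mu>\<bar> \<le> C * tv_norm M \<mu>)}"

end

theory Submission
  imports Defs
begin


lemma sm_empty:
  assumes "signed_measure M \<mu>" shows "\<mu> {} = 0"
proof -
  have "(\<lambda>n. \<mu> ((\<lambda>_::nat. {}) n)) sums \<mu> (\<Union>n. (\<lambda>_::nat. {}) n)"
    using assms unfolding signed_measure_def disjoint_family_on_def by auto
  hence "(\<lambda>n::nat. \<mu> {}) sums \<mu> {}" by simp
  hence "(\<lambda>n::nat. \<mu> {}) \<longlonglongrightarrow> 0" using summable_LIMSEQ_zero sums_summable by blast
  thus ?thesis using LIMSEQ_const_iff by blast
qed

lemma sm_out: "signed_measure M \<mu> \<Longrightarrow> A \<notin> sets M \<Longrightarrow> \<mu> A = 0"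
  unfolding signed_measure_def by auto

lemma sm_countable:
  "signed_measure M \<mu> \<Longrightarrow> disjoint_family A \<Longrightarrow> range A \<subseteq> sets M \<Longrightarrow> (\<lambda>n. \<mu> (A n)) sums \<mu> (\<Union>n. A n)"
  unfolding signed_measure_def by auto

lemma sm_add:
  assumes "signed_measure M \<mu>" "A \<in> sets M" "B \<in> sets M" "A \<inter> B = {}"
  shows "\<mu> (A \<union> B) = \<mu> A + \<mu> B"
proof -
  have "disjoint_family (binaryset A B)"
    using assms by (auto simp: disjoint_family_on_def binaryset_def)
  moreover have "range (binaryset A B) \<subseteq> sets M"
    using assms by (auto simp: binaryset_def)
  ultimately have "(\<lambda>n. \<mu> (binaryset A B n)) sums \<mu> (\<Union>n. binaryset A B n)"
    using sm_countable[OF assms(1)] by blast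
  moreover have "(\<lambda>n. \<mu> (binaryset A B n)) sums (\<mu> A + \<mu> B)"
    by (rule binaryset_sums) (rule sm_empty[OF assms(1)])
  ultimately show ?thesis using sums_unique2 UN_binaryset_eq by metis
qed

lemma sm_diff:
  assumes "signed_measure M \<mu>" "A \<in> sets M" "B \<in> sets M" "B \<subseteq> A"
  shows "\<mu> (A - B) = \<mu> A - \<mu> B"
proof -
  have "A = (A - B) \<union> B" using assms by auto
  hence "\<mu> A = \<mu> (A - B) + \<mu> B" using sm_add[OF assms(1), of "A - B" B] assms by auto
  thus ?thesis by simp
qed

lemma sm_finite_union:
  fixes n :: nat
  assumes "signed_measure M \<mu>" "\<And>i. A i \<in> sets M" "disjoint_family A"
  shows "\<mu> (\<Union>i<n. A i) = (\<Sum>i<n. \<mu> (A i))"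
proof (induction n)
  case 0 then show ?case using sm_empty[OF assms(1)] by simp
next
  case (Suc n)
  have "(\<Union>i<Suc n. A i) = (\<Union>i<n. A i) \<union> A n" by (auto simp: lessThan_Suc)
  moreover have "(\<Union>i<n. A i) \<inter> A n = {}"
  proof -
    { fix i assume "i < n" hence "A i \<inter> A n = {}" using assms(3) unfolding disjoint_family_on_def by simp }
    thus ?thesis by blast
  qed
  moreover have "(\<Union>i<n. A i) \<in> sets M" using assms(2) by auto
  ultimately have "\<mu> (\<Union>i<Suc n. A i) = \<mu> (\<Union>i<n. A i) + \<mu> (A n)"
    using sm_add[OF assms(1) _ assms(2)[of n]] by presburger
  thus ?case using Suc.IH by simp
qed

definition pm :: "'a measure \<Rightarrow> ('a set \<Rightarrow> real) \<Rightarrow> bool" where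
  "pm M \<rho> \<longleftrightarrow> signed_measure M \<rho> \<and> (\<forall>A\<in>sets M. 0 \<le> \<rho> A)"

definition toM :: "'a measure \<Rightarrow> ('a set \<Rightarrow> real) \<Rightarrow> 'a measure" where
  "toM M \<rho> = measure_of (space M) (sets M) (\<lambda>A. ennreal (\<rho> A))"

lemma pm_nonneg: "pm M \<rho> \<Longrightarrow> 0 \<le> \<rho> A"
  unfolding pm_def signed_measure_def by (cases "A \<in> sets M") auto

lemma pm_sm: "pm M \<rho> \<Longrightarrow> signed_measure M \<rho>" unfolding pm_def by auto

lemma toM_sets[simp, measurable_cong]: "sets (toM M \<rho>) = sets M"
  unfolding toM_def by simp

lemma toM_space[simp]: "space (toM M \<rho>) = space M"
  unfolding toM_def by simp

lemma measurable_toM1[simp]: "measurable (toM M \<rho>) N = measurable M N"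
  by (intro measurable_cong_sets) auto

lemma measurable_toM2[simp]: "measurable N (toM M \<rho>) = measurable N M"
  by (intro measurable_cong_sets) auto

lemma emeasure_toM:
  assumes "pm M \<rho>" "A \<in> sets M"
  shows "emeasure (toM M \<rho>) A = ennreal (\<rho> A)"
  unfolding toM_def
proof (rule emeasure_measure_of_sigma)
  show "sigma_algebra (space M) (sets M)" by (rule sets.sigma_algebra_axioms)
  show "positive (sets M) (\<lambda>A. ennreal (\<rho> A))"
    using sm_empty[OF pm_sm[OF assms(1)]] by (auto simp: positive_def)
  show "countably_additive (sets M) (\<lambda>A. ennreal (\<rho> A))"
    unfolding countably_additive_def
  proof safe
    fix A :: "nat \<Rightarrow> _" assume "range A \<subseteq> sets M" "disjoint_family A" "\<Union> (range A) \<in> sets M"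
    hence S: "(\<lambda>n. \<rho> (A n)) sums \<rho> (\<Union>n. A n)" using sm_countable[OF pm_sm[OF assms(1)]] by blast
    show "(\<Sum>i. ennreal (\<rho> (A i))) = ennreal (\<rho> (\<Union> (range A)))"
      using suminf_ennreal_eq[of "\<lambda>n. \<rho> (A n)", OF _ S] pm_nonneg[OF assms(1)] by blast
  qed
qed fact

lemma measure_toM:
  assumes "pm M \<rho>" shows "measure (toM M \<rho>) A = \<rho> A"
proof (cases "A \<in> sets M")
  case True thus ?thesis using emeasure_toM[OF assms True] pm_nonneg[OF assms]
    by (simp add: measure_def)
next
  case False thus ?thesis using pm_sm[OF assms] sm_out
    by (metis measure_notin_sets toM_sets)
qed

lemma finite_measure_toM:
  assumes "pm M \<rho>" shows "finite_measure (toM M \<rho>)"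
proof -
  have "emeasure (toM M \<rho>) (space M) = ennreal (\<rho> (space M))" by (rule emeasure_toM[OF assms sets.top])
  thus ?thesis by (intro finite_measureI) simp
qed

lemma null_toM:
  assumes "pm M \<rho>" shows "A \<in> null_sets (toM M \<rho>) \<longleftrightarrow> A \<in> sets M \<and> \<rho> A = 0"
proof (cases "A \<in> sets M")
  case True
  hence "emeasure (toM M \<rho>) A = ennreal (\<rho> A)" by (rule emeasure_toM[OF assms])
  thus ?thesis using True pm_nonneg[OF assms, of A] unfolding null_sets_def by simp
qed (simp add: null_sets_def)

lemma pm_mono: "pm M \<rho> \<Longrightarrow> A \<in> sets M \<Longrightarrow> B \<in> sets M \<Longrightarrow> A \<subseteq> B \<Longrightarrow> \<rho> A \<le> \<rho> B"
  using sm_diff[OF pm_sm, of M \<rho> B A] pm_nonneg[of M \<rho> "B - A"] by auto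

definition ofM :: "'a measure \<Rightarrow> 'a measure \<Rightarrow> 'a set \<Rightarrow> real" where
  "ofM M N A = (if A \<in> sets M then measure N A else 0)"

lemma pm_ofM:
  assumes "finite_measure N" "sets N = sets M"
  shows "pm M (ofM M N)"
  unfolding pm_def signed_measure_def ofM_def
proof safe
  fix A :: "nat \<Rightarrow> _" assume "disjoint_family A" "range A \<subseteq> sets M"
  thus "(\<lambda>n. if A n \<in> sets M then measure N (A n) else 0) sums
      (if \<Union> (range A) \<in> sets M then measure N (\<Union> (range A)) else 0)"
    using finite_measure.finite_measure_UNION[OF assms(1), of A] assms(2) by auto
next
  fix A assume "A \<in> sets M" thus "0 \<le> (if A \<in> sets M then measure N A else 0)" by simp
qed simp


lemma sm_bounded:
  assumes "signed_measure M \<mu>" shows "\<exists>C. \<forall>A\<in>sets M. \<bar>\<mu> A\<bar> \<le> C"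
proof (rule ccontr)
  define unb where "unb A \<longleftrightarrow> (\<forall>C. \<exists>B\<in>sets M. B \<subseteq> A \<and> C < \<bar>\<mu> B\<bar>)" for A
  assume nb: "\<not> (\<exists>C. \<forall>A\<in>sets M. \<bar>\<mu> A\<bar> \<le> C)"
  have unbO: "unb (space M)" unfolding unb_def
  proof
    fix C from nb obtain A where "A \<in> sets M" "C < \<bar>\<mu> A\<bar>" by (auto simp: not_le)
    thus "\<exists>B\<in>sets M. B \<subseteq> space M \<and> C < \<bar>\<mu> B\<bar>" using sets.sets_into_space by blast
  qed
  have step: "\<exists>B. B \<in> sets M \<and> B \<subseteq> A \<and> 1 \<le> \<bar>\<mu> B\<bar> \<and> unb (A - B)" if A: "A \<in> sets M" "unb A" for A
  proof -
    obtain B where B: "B \<in> sets M" "B \<subseteq> A" "\<bar>\<mu> A\<bar> + 1 < \<bar>\<mu> B\<bar>" using A(2) unfolding unb_def by blast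
    show ?thesis
    proof (cases "unb (A - B)")
      case True thus ?thesis using B by (intro exI[of _ B]) auto
    next
      case False
      then obtain C0 where C0: "\<And>D. D \<in> sets M \<Longrightarrow> D \<subseteq> A - B \<Longrightarrow> \<bar>\<mu> D\<bar> \<le> C0"
        unfolding unb_def by (auto simp: not_less)
      have "unb B" unfolding unb_def
      proof
        fix C
        obtain D where D: "D \<in> sets M" "D \<subseteq> A" "C + C0 < \<bar>\<mu> D\<bar>" using A(2) unfolding unb_def by blast
        have DU: "D = (D \<inter> B) \<union> (D - B)" by auto
        have "\<mu> D = \<mu> (D \<inter> B) + \<mu> (D - B)"
          using sm_add[OF assms, of "D \<inter> B" "D - B"] D(1) B(1) DU by auto
        moreover have "\<bar>\<mu> (D - B)\<bar> \<le> C0" using C0[of "D - B"] D B by auto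
        ultimately have "C < \<bar>\<mu> (D \<inter> B)\<bar>" using D by linarith
        thus "\<exists>B'\<in>sets M. B' \<subseteq> B \<and> C < \<bar>\<mu> B'\<bar>" using D B by (intro bexI[of _ "D \<inter> B"]) auto
      qed
      moreover have "A - (A - B) = B" using B by auto
      moreover have "1 \<le> \<bar>\<mu> (A - B)\<bar>" using sm_diff[OF assms A(1) B(1) B(2)] B by linarith
      ultimately show ?thesis using A B by (intro exI[of _ "A - B"]) auto
    qed
  qed
  define nxt where "nxt A = (SOME B. B \<in> sets M \<and> B \<subseteq> A \<and> 1 \<le> \<bar>\<mu> B\<bar> \<and> unb (A - B))" for A
  have nxt: "nxt A \<in> sets M \<and> nxt A \<subseteq> A \<and> 1 \<le> \<bar>\<mu> (nxt A)\<bar> \<and> unb (A - nxt A)" if "A \<in> sets M" "unb A" for A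
    using someI_ex[OF step[OF that]] unfolding nxt_def .
  define An where "An n = rec_nat (space M) (\<lambda>_ A. A - nxt A) n" for n
  have An0: "An 0 = space M" and AnS: "\<And>n. An (Suc n) = An n - nxt (An n)" by (simp_all add: An_def)
  have inv: "An n \<in> sets M \<and> unb (An n)" for n
  proof (induction n)
    case 0 thus ?case using unbO by (simp add: An0)
  next
    case (Suc n) thus ?case using nxt[of "An n"] by (auto simp: AnS)
  qed
  define B where "B n = nxt (An n)" for n
  have Bs: "B n \<in> sets M" "B n \<subseteq> An n" "1 \<le> \<bar>\<mu> (B n)\<bar>" for n using nxt inv unfolding B_def by auto
  have dec: "An n \<subseteq> An m" if "m \<le> n" for m n using that
    by (induction rule: dec_induct) (auto simp: AnS)
  have "disjoint_family B"
    unfolding disjoint_family_on_def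
  proof (intro ballI impI)
    fix m n :: nat assume "m \<noteq> n"
    { fix m n :: nat assume "m < n"
      hence "B n \<subseteq> An (Suc m)" using dec[of "Suc m" n] Bs(2)[of n] by auto
      hence "B n \<inter> B m = {}" using AnS[of m] B_def by auto }
    thus "B m \<inter> B n = {}" using \<open>m\<noteq>n\<close> by (metis Int_commute nat_neq_iff)
  qed
  hence "(\<lambda>n. \<mu> (B n)) sums \<mu> (\<Union>n. B n)" using sm_countable[OF assms] Bs(1) by blast
  hence "(\<lambda>n. \<mu> (B n)) \<longlonglongrightarrow> 0" using summable_LIMSEQ_zero sums_summable by blast
  hence "eventually (\<lambda>n. dist (\<mu> (B n)) 0 < 1) sequentially" by (rule tendstoD) simp
  then obtain n where "\<bar>\<mu> (B n)\<bar> < 1" by (auto simp: eventually_sequentially dist_real_def)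
  thus False using Bs(3)[of n] by simp
qed


definition jp :: "'a measure \<Rightarrow> ('a set \<Rightarrow> real) \<Rightarrow> 'a set \<Rightarrow> real" where
  "jp M \<mu> A = Sup {\<mu> B | B. B \<in> sets M \<and> B \<subseteq> A}"

definition jpr :: "'a measure \<Rightarrow> ('a set \<Rightarrow> real) \<Rightarrow> 'a set \<Rightarrow> real" where
  "jpr M \<mu> A = (if A \<in> sets M then jp M \<mu> A else 0)"

definition jnr :: "'a measure \<Rightarrow> ('a set \<Rightarrow> real) \<Rightarrow> 'a set \<Rightarrow> real" where
  "jnr M \<mu> A = jpr M \<mu> A - \<mu> A"

context
  fixes M :: "'a measure" and \<mu> :: "'a set \<Rightarrow> real"
  assumes sm: "signed_measure M \<mu>"
begin

lemma jp_bdd: "bdd_above {\<mu> B | B. B \<in> sets M \<and> B \<subseteq> A}"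
proof -
  obtain C where "\<forall>A\<in>sets M. \<bar>\<mu> A\<bar> \<le> C" using sm_bounded[OF sm] by blast
  thus ?thesis unfolding bdd_above_def by (intro exI[of _ C]) force
qed

lemma jp_ge: "B \<in> sets M \<Longrightarrow> B \<subseteq> A \<Longrightarrow> \<mu> B \<le> jp M \<mu> A"
  unfolding jp_def by (rule cSup_upper[OF _ jp_bdd]) blast

lemma jp_nonneg: "0 \<le> jp M \<mu> A"
  using jp_ge[of "{}" A] sm_empty[OF sm] by simp

lemma jp_le: "(\<And>B. B \<in> sets M \<Longrightarrow> B \<subseteq> A \<Longrightarrow> \<mu> B \<le> c) \<Longrightarrow> jp M \<mu> A \<le> c"
  unfolding jp_def by (rule cSup_least) auto

lemma jp_mono: "A \<subseteq> A' \<Longrightarrow> jp M \<mu> A \<le> jp M \<mu> A'"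
  by (rule jp_le) (rule jp_ge, auto)

lemma jp_superadd:
  assumes "A \<in> sets M" "A' \<in> sets M" "A \<inter> A' = {}"
  shows "jp M \<mu> A + jp M \<mu> A' \<le> jp M \<mu> (A \<union> A')"
proof -
  have "\<mu> B2 \<le> jp M \<mu> (A \<union> A') - jp M \<mu> A" if B2: "B2 \<in> sets M" "B2 \<subseteq> A'" for B2
  proof -
    have "jp M \<mu> A \<le> jp M \<mu> (A \<union> A') - \<mu> B2"
    proof (rule jp_le)
      fix B1 assume B1: "B1 \<in> sets M" "B1 \<subseteq> A"
      have "\<mu> (B1 \<union> B2) = \<mu> B1 + \<mu> B2" using sm_add[OF sm B1(1) B2(1)] B1 B2 assms(3) by auto
      moreover have "\<mu> (B1 \<union> B2) \<le> jp M \<mu> (A \<union> A')" using B1 B2 by (intro jp_ge) auto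
      ultimately show "\<mu> B1 \<le> jp M \<mu> (A \<union> A') - \<mu> B2" by simp
    qed
    thus ?thesis by simp
  qed
  hence "jp M \<mu> A' \<le> jp M \<mu> (A \<union> A') - jp M \<mu> A" by (intro jp_le)
  thus ?thesis by simp
qed

lemma jp_finite:
  fixes n :: nat
  assumes "\<And>i. A i \<in> sets M" "disjoint_family A"
  shows "(\<Sum>i<n. jp M \<mu> (A i)) \<le> jp M \<mu> (\<Union>i<n. A i)"
proof (induction n)
  case 0 thus ?case using jp_nonneg by simp
next
  case (Suc n)
  have U: "(\<Union>i<Suc n. A i) = (\<Union>i<n. A i) \<union> A n" by (auto simp: lessThan_Suc)
  have "(\<Union>i<n. A i) \<inter> A n = {}"
  proof -
    { fix i assume "i < n" hence "A i \<inter> A n = {}" using assms(2) unfolding disjoint_family_on_def by simp }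
    thus ?thesis by blast
  qed
  moreover have "(\<Union>i<n. A i) \<in> sets M" using assms(1) by auto
  ultimately have "jp M \<mu> (\<Union>i<n. A i) + jp M \<mu> (A n) \<le> jp M \<mu> (\<Union>i<Suc n. A i)"
    unfolding U by (intro jp_superadd assms(1))
  thus ?case using Suc.IH by simp
qed

lemma jp_sums:
  assumes "disjoint_family A" "range A \<subseteq> sets M"
  shows "(\<lambda>n. jp M \<mu> (A n)) sums jp M \<mu> (\<Union>n. A n)"
proof -
  have As: "\<And>i. A i \<in> sets M" using assms(2) by auto
  have part: "(\<Sum>i<n. jp M \<mu> (A i)) \<le> jp M \<mu> (\<Union>n. A n)" for n
    using jp_finite[OF As assms(1), of n] jp_mono[of "\<Union>i<n. A i" "\<Union>n. A n"] by force
  have summ: "summable (\<lambda>n. jp M \<mu> (A n))"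
    by (rule summableI_nonneg_bounded[OF jp_nonneg part])
  have le1: "(\<Sum>n. jp M \<mu> (A n)) \<le> jp M \<mu> (\<Union>n. A n)"
    by (rule suminf_le_const[OF summ part])
  have le2: "jp M \<mu> (\<Union>n. A n) \<le> (\<Sum>n. jp M \<mu> (A n))"
  proof (rule jp_le)
    fix B assume B: "B \<in> sets M" "B \<subseteq> (\<Union>n. A n)"
    have "disjoint_family (\<lambda>n. B \<inter> A n)" using assms(1) unfolding disjoint_family_on_def by auto
    moreover have "range (\<lambda>n. B \<inter> A n) \<subseteq> sets M" using B As by auto
    ultimately have "(\<lambda>n. \<mu> (B \<inter> A n)) sums \<mu> (\<Union>n. B \<inter> A n)" by (rule sm_countable[OF sm])
    moreover have "(\<Union>n. B \<inter> A n) = B" using B by auto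
    ultimately have S: "(\<lambda>n. \<mu> (B \<inter> A n)) sums \<mu> B" by simp
    have "\<mu> B = (\<Sum>n. \<mu> (B \<inter> A n))" using S by (simp add: sums_iff)
    also have "\<dots> \<le> (\<Sum>n. jp M \<mu> (A n))"
      using S summ by (intro suminf_le) (auto intro!: jp_ge B As simp: sums_iff)
    finally show "\<mu> B \<le> (\<Sum>n. jp M \<mu> (A n))" .
  qed
  have "(\<Sum>n. jp M \<mu> (A n)) = jp M \<mu> (\<Union>n. A n)" using le1 le2 by (rule antisym)
  thus ?thesis using summ summable_sums by metis
qed

lemma pm_jpr: "pm M (jpr M \<mu>)"
  unfolding pm_def signed_measure_def
proof safe
  fix A :: "nat \<Rightarrow> _" assume "disjoint_family A" "range A \<subseteq> sets M"
  moreover hence "(\<Union>n. A n) \<in> sets M" by auto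
  ultimately show "(\<lambda>n. jpr M \<mu> (A n)) sums jpr M \<mu> (\<Union> (range A))"
    using jp_sums[of A] by (auto simp: jpr_def)
qed (auto simp: jpr_def jp_nonneg)

lemma jpr_ge: "\<mu> A \<le> jpr M \<mu> A"
  using jp_ge[of A A] sm_out[OF sm, of A] by (auto simp: jpr_def)

lemma pm_jnr: "pm M (jnr M \<mu>)"
  unfolding pm_def signed_measure_def
proof safe
  fix A :: "nat \<Rightarrow> _" assume "disjoint_family A" "range A \<subseteq> sets M"
  thus "(\<lambda>n. jnr M \<mu> (A n)) sums jnr M \<mu> (\<Union> (range A))"
    unfolding jnr_def using pm_jpr sm_countable[OF sm] by (intro sums_diff) (auto simp: pm_def signed_measure_def)
next
  fix A assume "A \<notin> sets M" thus "jnr M \<mu> A = 0" using sm_out[OF sm] by (simp add: jnr_def jpr_def)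
next
  fix A show "0 \<le> jnr M \<mu> A" using jpr_ge[of A] by (simp add: jnr_def)
qed

lemma jordan: "\<mu> A = jpr M \<mu> A - jnr M \<mu> A"
  by (simp add: jnr_def)

end


lemma sm_lin:
  assumes "signed_measure M \<mu>" "signed_measure M \<nu>"
  shows "signed_measure M (\<lambda>A. a * \<mu> A + b * \<nu> A)"
  unfolding signed_measure_def
proof safe
  fix A :: "nat \<Rightarrow> _" assume "disjoint_family A" "range A \<subseteq> sets M"
  thus "(\<lambda>n. a * \<mu> (A n) + b * \<nu> (A n)) sums (a * \<mu> (\<Union> (range A)) + b * \<nu> (\<Union> (range A)))"
    using sm_countable[OF assms(1)] sm_countable[OF assms(2)] by (intro sums_add sums_mult) auto
next
  fix A assume "A \<notin> sets M" thus "a * \<mu> A + b * \<nu> A = 0" using sm_out[OF assms(1)] sm_out[OF assms(2)] by simp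
qed

lemma pm_add: "pm M a \<Longrightarrow> pm M b \<Longrightarrow> pm M (\<lambda>A. a A + b A)"
  using sm_lin[of M a b 1 1] unfolding pm_def by auto

lemma pm_scale: "pm M a \<Longrightarrow> 0 \<le> c \<Longrightarrow> pm M (\<lambda>A. c * a A)"
  using sm_lin[of M a a c 0] unfolding pm_def by auto

definition tvset :: "'a measure \<Rightarrow> ('a set \<Rightarrow> real) \<Rightarrow> real set" where
  "tvset M \<mu> = {(\<Sum>A\<in>\<A>. \<bar>\<mu> A\<bar>) | \<A>. finite \<A> \<and> \<A> \<subseteq> sets M \<and> disjoint \<A>}"

lemma tv_norm_tvset: "tv_norm M \<mu> = Sup (tvset M \<mu>)"
  unfolding tv_norm_def tvset_def by simp

lemma tv_sum_le:
  assumes "pm M \<nu>" "\<And>A. A \<in> sets M \<Longrightarrow> \<bar>\<mu> A\<bar> \<le> \<nu> A"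
    and "finite \<A>" "\<A> \<subseteq> sets M" "disjoint \<A>"
  shows "(\<Sum>A\<in>\<A>. \<bar>\<mu> A\<bar>) \<le> \<nu> (space M)"
proof -
  interpret finite_measure "toM M \<nu>" by (rule finite_measure_toM[OF assms(1)])
  have "(\<Sum>A\<in>\<A>. \<bar>\<mu> A\<bar>) \<le> (\<Sum>A\<in>\<A>. \<nu> A)" using assms(2,4) by (intro sum_mono) auto
  also have "\<dots> = (\<Sum>A\<in>\<A>. measure (toM M \<nu>) A)" using measure_toM[OF assms(1)] by simp
  also have "\<dots> = measure (toM M \<nu>) (\<Union>\<A>)"
    using assms(3,4,5) by (intro measure_Union'[symmetric]) (auto simp: fmeasurable_eq_sets)
  also have "\<dots> = \<nu> (\<Union>\<A>)" using measure_toM[OF assms(1)] by simp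
  also have "\<dots> \<le> \<nu> (space M)" using assms(3,4) sets.sets_into_space
    by (intro pm_mono[OF assms(1)]) auto
  finally show ?thesis .
qed

lemma tv_bdd:
  assumes "pm M \<nu>" "\<And>A. A \<in> sets M \<Longrightarrow> \<bar>\<mu> A\<bar> \<le> \<nu> A"
  shows "bdd_above (tvset M \<mu>)"
  unfolding tvset_def bdd_above_def using tv_sum_le[OF assms] by blast

lemma tv_le:
  assumes "pm M \<nu>" "\<And>A. A \<in> sets M \<Longrightarrow> \<bar>\<mu> A\<bar> \<le> \<nu> A"
  shows "tv_norm M \<mu> \<le> \<nu> (space M)"
  unfolding tv_norm_tvset
proof (rule cSup_least)
  have "(\<Sum>A\<in>{}. \<bar>\<mu> A\<bar>) \<in> tvset M \<mu>" unfolding tvset_def mem_Collect_eq by (rule exI[of _ "{}"]) simp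
  thus "tvset M \<mu> \<noteq> {}" by blast
qed (use tv_sum_le[OF assms] in \<open>auto simp: tvset_def\<close>)

lemma tv_ge_sum:
  assumes "bdd_above (tvset M \<mu>)" "finite \<A>" "\<A> \<subseteq> sets M" "disjoint \<A>"
  shows "(\<Sum>A\<in>\<A>. \<bar>\<mu> A\<bar>) \<le> tv_norm M \<mu>"
  unfolding tv_norm_tvset by (rule cSup_upper[OF _ assms(1)]) (use assms in \<open>auto simp: tvset_def\<close>)

lemma tv_ge2:
  assumes "signed_measure M \<mu>" "bdd_above (tvset M \<mu>)" "A \<in> sets M"
  shows "\<bar>\<mu> A\<bar> + \<bar>\<mu> (space M - A)\<bar> \<le> tv_norm M \<mu>"
proof (cases "A = space M - A")
  case True
  hence "A = {}" "space M = {}" by auto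
  thus ?thesis using tv_ge_sum[OF assms(2), of "{}"] sm_empty[OF assms(1)] by simp
next
  case False
  have "(\<Sum>B\<in>{A, space M - A}. \<bar>\<mu> B\<bar>) \<le> tv_norm M \<mu>"
    using assms(3) by (intro tv_ge_sum[OF assms(2)]) (auto simp: pairwise_def disjnt_def)
  thus ?thesis using False by simp
qed

lemma tv_nonneg:
  assumes "bdd_above (tvset M \<mu>)" shows "0 \<le> tv_norm M \<mu>"
  using tv_ge_sum[OF assms, of "{}"] by simp

lemma jabs:
  assumes "signed_measure M \<mu>"
  shows "\<bar>\<mu> A\<bar> \<le> jpr M \<mu> A + jnr M \<mu> A"
  using jpr_ge[OF assms, of A] pm_nonneg[OF pm_jnr[OF assms], of A] pm_nonneg[OF pm_jpr[OF assms], of A]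
  by (simp add: jnr_def)

lemma tv_jordan:
  assumes sm: "signed_measure M \<mu>"
  shows "tv_norm M \<mu> = jpr M \<mu> (space M) + jnr M \<mu> (space M)"
    and "bdd_above (tvset M \<mu>)"
proof -
  have pmJ: "pm M (\<lambda>A. jpr M \<mu> A + jnr M \<mu> A)" by (intro pm_add pm_jpr pm_jnr sm)
  show bdd: "bdd_above (tvset M \<mu>)" by (rule tv_bdd[OF pmJ jabs[OF sm]])
  have le: "tv_norm M \<mu> \<le> jpr M \<mu> (space M) + jnr M \<mu> (space M)"
    using tv_le[OF pmJ jabs[OF sm]] .
  have "jp M \<mu> (space M) \<le> (tv_norm M \<mu> + \<mu> (space M)) / 2"
  proof (rule jp_le[OF sm])
    fix B assume B: "B \<in> sets M" "B \<subseteq> space M"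
    have "\<mu> (space M - B) = \<mu> (space M) - \<mu> B" by (rule sm_diff[OF sm sets.top B])
    moreover have "\<bar>\<mu> B\<bar> + \<bar>\<mu> (space M - B)\<bar> \<le> tv_norm M \<mu>" by (rule tv_ge2[OF sm bdd B(1)])
    ultimately have "2 * \<mu> B \<le> tv_norm M \<mu> + \<mu> (space M)"
      using abs_ge_self[of "\<mu> B"] abs_ge_minus_self[of "\<mu> (space M - B)"] by argo
    thus "\<mu> B \<le> (tv_norm M \<mu> + \<mu> (space M)) / 2" by simp
  qed
  hence "jpr M \<mu> (space M) + jnr M \<mu> (space M) \<le> tv_norm M \<mu>"
    by (simp add: jnr_def jpr_def)
  thus "tv_norm M \<mu> = jpr M \<mu> (space M) + jnr M \<mu> (space M)" using le by simp
qed


lemma abs_cont_null: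
  assumes "pm M \<rho>" "pm M \<nu>" "abs_cont M \<nu> \<rho>"
  shows "absolutely_continuous (toM M \<rho>) (toM M \<nu>)"
  unfolding absolutely_continuous_def
proof
  fix A assume "A \<in> null_sets (toM M \<rho>)"
  hence "A \<in> sets M" "\<rho> A = 0" using null_toM[OF assms(1)] by auto
  hence "\<nu> A = 0" using assms(3) unfolding abs_cont_def by blast
  thus "A \<in> null_sets (toM M \<nu>)" using null_toM[OF assms(2)] \<open>A \<in> sets M\<close> by auto
qed

lemma rn_real:
  assumes "pm M \<rho>" "pm M \<nu>" "abs_cont M \<nu> \<rho>"
  shows "\<exists>g. g \<in> borel_measurable M \<and> (\<forall>x. 0 \<le> g x) \<and>
      toM M \<nu> = density (toM M \<rho>) (\<lambda>x. ennreal (g x)) \<and> integrable (toM M \<rho>) g"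
proof -
  interpret R: finite_measure "toM M \<rho>" by (rule finite_measure_toM[OF assms(1)])
  interpret N: finite_measure "toM M \<nu>" by (rule finite_measure_toM[OF assms(2)])
  obtain p where p: "p \<in> borel_measurable (toM M \<rho>)" "density (toM M \<rho>) p = toM M \<nu>"
    using R.Radon_Nikodym_finite_measure[OF N.finite_measure_axioms _ abs_cont_null[OF assms]] by auto
  have pm[measurable]: "p \<in> borel_measurable M" using p(1) by simp
  have "emeasure (density (toM M \<rho>) p) (space M) = (\<integral>\<^sup>+x. p x \<partial>toM M \<rho>)"
    by (subst emeasure_density) (auto intro!: nn_integral_cong simp: indicator_def)
  hence fin: "(\<integral>\<^sup>+x. p x \<partial>toM M \<rho>) \<noteq> \<infinity>" using p(2) N.emeasure_finite[of "space M"] by simp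
  hence ae: "AE x in toM M \<rho>. p x \<noteq> \<infinity>" by (intro nn_integral_PInf_AE) auto
  define g where "g x = enn2real (p x)" for x
  have gm[measurable]: "g \<in> borel_measurable M" unfolding g_def by measurable
  have ae2: "AE x in toM M \<rho>. p x = ennreal (g x)"
    using ae by eventually_elim (auto simp: g_def less_top)
  have dens: "density (toM M \<rho>) p = density (toM M \<rho>) (\<lambda>x. ennreal (g x))"
    by (rule density_cong) (use ae2 in auto)
  have "(\<integral>\<^sup>+x. ennreal (g x) \<partial>toM M \<rho>) = (\<integral>\<^sup>+x. p x \<partial>toM M \<rho>)"
    by (rule nn_integral_cong_AE) (use ae2 in auto)
  hence "integrable (toM M \<rho>) g" using fin
    by (intro integrableI_nonneg) (auto simp: g_def less_top)
  thus ?thesis using dens p(2) gm by (intro exI[of _ g]) (auto simp: g_def)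
qed

definition has_dens :: "'a measure \<Rightarrow> ('a set \<Rightarrow> real) \<Rightarrow> ('a set \<Rightarrow> real) \<Rightarrow> ('a \<Rightarrow> real) \<Rightarrow> bool" where
  "has_dens M \<rho> \<mu> h \<longleftrightarrow> h \<in> borel_measurable M \<and> integrable (toM M \<rho>) h \<and>
     (\<forall>A\<in>sets M. \<mu> A = (\<integral>x. h x * indicator A x \<partial>toM M \<rho>))"

lemma measure_density_real:
  assumes "pm M \<rho>" "g \<in> borel_measurable M" "\<And>x. 0 \<le> g x" "integrable (toM M \<rho>) g" "A \<in> sets M"
  shows "measure (density (toM M \<rho>) (\<lambda>x. ennreal (g x))) A = (\<integral>x. g x * indicator A x \<partial>toM M \<rho>)"
proof -
  have "measure (density (toM M \<rho>) (\<lambda>x. ennreal (g x))) A =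
      integral\<^sup>L (density (toM M \<rho>) (\<lambda>x. ennreal (g x))) (indicator A)"
    using assms(5) by (simp add: Int_absorb2 sets.sets_into_space)
  also have "\<dots> = (\<integral>x. g x * indicator A x \<partial>toM M \<rho>)"
    using assms by (subst integral_density) auto
  finally show ?thesis .
qed

lemma finite_density_real:
  assumes "pm M \<rho>" "g \<in> borel_measurable M" "\<And>x. 0 \<le> g x" "integrable (toM M \<rho>) g"
  shows "finite_measure (density (toM M \<rho>) (\<lambda>x. ennreal (g x)))"
proof (rule finite_measureI)
  have "emeasure (density (toM M \<rho>) (\<lambda>x. ennreal (g x))) (space M) = (\<integral>\<^sup>+x. ennreal (g x) \<partial>toM M \<rho>)"
    using assms(2) by (subst emeasure_density) (auto intro!: nn_integral_cong simp: indicator_def)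
  also have "\<dots> = ennreal (\<integral>x. g x \<partial>toM M \<rho>)"
    using assms by (intro nn_integral_eq_integral) auto
  finally show "emeasure (density (toM M \<rho>) (\<lambda>x. ennreal (g x))) (space (density (toM M \<rho>) (\<lambda>x. ennreal (g x)))) \<noteq> \<infinity>"
    by simp
qed

lemma pm_dens:
  assumes "pm M \<rho>" "g \<in> borel_measurable M" "\<And>x. 0 \<le> g x" "integrable (toM M \<rho>) g"
  shows "pm M (\<lambda>A. if A \<in> sets M then (\<integral>x. g x * indicator A x \<partial>toM M \<rho>) else 0)"
proof -
  have "pm M (ofM M (density (toM M \<rho>) (\<lambda>x. ennreal (g x))))"
    by (rule pm_ofM[OF finite_density_real[OF assms]]) simp
  moreover have "ofM M (density (toM M \<rho>) (\<lambda>x. ennreal (g x))) =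
     (\<lambda>A. if A \<in> sets M then (\<integral>x. g x * indicator A x \<partial>toM M \<rho>) else 0)"
    using measure_density_real[OF assms] by (auto simp: ofM_def)
  ultimately show ?thesis by simp
qed


lemma aux_bound: "0 \<le> g \<Longrightarrow> \<bar>f\<bar> \<le> K \<Longrightarrow> norm (g * f) \<le> norm (K * (g::real))"
proof -
  assume g: "0 \<le> g" and f: "\<bar>f\<bar> \<le> K"
  have "norm (g * f) = g * \<bar>f\<bar>" using g by (simp add: abs_mult)
  also have "\<dots> \<le> g * K" by (rule mult_left_mono[OF f g])
  also have "\<dots> \<le> norm (K * g)" by (simp add: mult.commute)
  finally show ?thesis .
qed

definition Phi :: "'a measure \<Rightarrow> ('a \<Rightarrow> real) \<Rightarrow> ('a set \<Rightarrow> real) \<Rightarrow> real" where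
  "Phi M f \<mu> = integral\<^sup>L (toM M (jpr M \<mu>)) f - integral\<^sup>L (toM M (jnr M \<mu>)) f"

lemma abs_cont_jpr:
  assumes "signed_measure M \<mu>" "pm M \<rho>" "abs_cont M \<mu> \<rho>"
  shows "abs_cont M (jpr M \<mu>) \<rho>" "abs_cont M (jnr M \<mu>) \<rho>"
proof -
  have z: "jpr M \<mu> B = 0 \<and> jnr M \<mu> B = 0" if "A \<in> sets M" "\<rho> A = 0" "B \<in> sets M" "B \<subseteq> A" for A B
  proof -
    have "jp M \<mu> B \<le> 0"
      using assms(3) that unfolding abs_cont_def by (intro jp_le[OF assms(1)]) auto
    moreover have "\<mu> B = 0" using assms(3) that unfolding abs_cont_def by auto
    ultimately show ?thesis using jp_nonneg[OF assms(1), of B] that by (simp add: jnr_def jpr_def)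
  qed
  show "abs_cont M (jpr M \<mu>) \<rho>" "abs_cont M (jnr M \<mu>) \<rho>" unfolding abs_cont_def using z by auto
qed

lemma dens_exists:
  assumes sm: "signed_measure M \<mu>" and pr: "pm M \<rho>" and ac: "abs_cont M \<mu> \<rho>"
  shows "\<exists>h. has_dens M \<rho> \<mu> h \<and> (\<forall>f K. f \<in> borel_measurable M \<longrightarrow> (AE x in toM M \<rho>. \<bar>f x\<bar> \<le> K) \<longrightarrow>
            integrable (toM M \<rho>) (\<lambda>x. h x * f x) \<and> Phi M f \<mu> = (\<integral>x. h x * f x \<partial>toM M \<rho>))"
proof -
  obtain gp where gp: "gp \<in> borel_measurable M" "\<forall>x. 0 \<le> gp x"
      "toM M (jpr M \<mu>) = density (toM M \<rho>) (\<lambda>x. ennreal (gp x))" "integrable (toM M \<rho>) gp"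
    using rn_real[OF pr pm_jpr[OF sm] abs_cont_jpr(1)[OF sm pr ac]] by blast
  obtain gn where gn: "gn \<in> borel_measurable M" "\<forall>x. 0 \<le> gn x"
      "toM M (jnr M \<mu>) = density (toM M \<rho>) (\<lambda>x. ennreal (gn x))" "integrable (toM M \<rho>) gn"
    using rn_real[OF pr pm_jnr[OF sm] abs_cont_jpr(2)[OF sm pr ac]] by blast
  define h where "h x = gp x - gn x" for x
  have hm[measurable]: "h \<in> borel_measurable M" using gp gn unfolding h_def by measurable
  have hi: "integrable (toM M \<rho>) h" using gp gn unfolding h_def by auto
  have "\<mu> A = (\<integral>x. h x * indicator A x \<partial>toM M \<rho>)" if A: "A \<in> sets M" for A
  proof -
    have "jpr M \<mu> A = (\<integral>x. gp x * indicator A x \<partial>toM M \<rho>)"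
      using measure_density_real[OF pr gp(1) _ gp(4) A] gp(2,3) measure_toM[OF pm_jpr[OF sm]] by metis
    moreover have "jnr M \<mu> A = (\<integral>x. gn x * indicator A x \<partial>toM M \<rho>)"
      using measure_density_real[OF pr gn(1) _ gn(4) A] gn(2,3) measure_toM[OF pm_jnr[OF sm]] by metis
    moreover have "(\<integral>x. h x * indicator A x \<partial>toM M \<rho>) =
       (\<integral>x. gp x * indicator A x \<partial>toM M \<rho>) - (\<integral>x. gn x * indicator A x \<partial>toM M \<rho>)"
      unfolding h_def left_diff_distrib
      using A gp(4) gn(4) by (intro Bochner_Integration.integral_diff integrable_real_mult_indicator) auto
    ultimately show ?thesis using jordan[OF sm, of A] by simp
  qed
  hence hd: "has_dens M \<rho> \<mu> h" unfolding has_dens_def using hm hi by auto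
  have "integrable (toM M \<rho>) (\<lambda>x. h x * f x) \<and> Phi M f \<mu> = (\<integral>x. h x * f x \<partial>toM M \<rho>)"
    if fm[measurable]: "f \<in> borel_measurable M" and fb: "AE x in toM M \<rho>. \<bar>f x\<bar> \<le> K" for f K
  proof -
    have ip: "integrable (toM M \<rho>) (\<lambda>x. gp x * f x)"
    proof (rule Bochner_Integration.integrable_bound[of _ "\<lambda>x. K * gp x"])
      show "integrable (toM M \<rho>) (\<lambda>x. K * gp x)" using gp(4) by simp
      show "AE x in toM M \<rho>. norm (gp x * f x) \<le> norm (K * gp x)"
        using fb by eventually_elim (metis aux_bound gp(2))
    qed (use gp(1) in simp)
    have inn: "integrable (toM M \<rho>) (\<lambda>x. gn x * f x)"
    proof (rule Bochner_Integration.integrable_bound[of _ "\<lambda>x. K * gn x"])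
      show "integrable (toM M \<rho>) (\<lambda>x. K * gn x)" using gn(4) by simp
      show "AE x in toM M \<rho>. norm (gn x * f x) \<le> norm (K * gn x)"
        using fb by eventually_elim (metis aux_bound gn(2))
    qed (use gn(1) in simp)
    have "integral\<^sup>L (toM M (jpr M \<mu>)) f = (\<integral>x. gp x * f x \<partial>toM M \<rho>)"
      unfolding gp(3) using gp by (subst integral_density) auto
    moreover have "integral\<^sup>L (toM M (jnr M \<mu>)) f = (\<integral>x. gn x * f x \<partial>toM M \<rho>)"
      unfolding gn(3) using gn by (subst integral_density) auto
    moreover have "(\<integral>x. h x * f x \<partial>toM M \<rho>) = (\<integral>x. gp x * f x \<partial>toM M \<rho>) - (\<integral>x. gn x * f x \<partial>toM M \<rho>)"
      unfolding h_def left_diff_distrib using ip inn by (rule Bochner_Integration.integral_diff)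
    moreover have "integrable (toM M \<rho>) (\<lambda>x. h x * f x)"
      unfolding h_def left_diff_distrib using ip inn by (rule Bochner_Integration.integrable_diff)
    ultimately show ?thesis unfolding Phi_def by simp
  qed
  thus ?thesis using hd by blast
qed

lemma dens_unique:
  assumes "has_dens M \<rho> \<mu> h1" "has_dens M \<rho> \<mu> h2"
  shows "AE x in toM M \<rho>. h1 x = h2 x"
proof -
  define d where "d x = h1 x - h2 x" for x
  have dm[measurable]: "d \<in> borel_measurable M" using assms unfolding has_dens_def d_def by auto
  have di: "integrable (toM M \<rho>) d" using assms unfolding has_dens_def d_def by auto
  have zero: "(\<integral>x. d x * indicator A x \<partial>toM M \<rho>) = 0" if "A \<in> sets M" for A
  proof -
    have "(\<integral>x. d x * indicator A x \<partial>toM M \<rho>) =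
        (\<integral>x. h1 x * indicator A x \<partial>toM M \<rho>) - (\<integral>x. h2 x * indicator A x \<partial>toM M \<rho>)"
      unfolding d_def left_diff_distrib using assms that unfolding has_dens_def
      by (intro Bochner_Integration.integral_diff integrable_real_mult_indicator) auto
    thus ?thesis using assms that unfolding has_dens_def by auto
  qed
  define P where "P = {x \<in> space M. 0 < d x}"
  define N where "N = {x \<in> space M. d x < 0}"
  have PN[measurable]: "P \<in> sets M" "N \<in> sets M" unfolding P_def N_def by measurable
  have "AE x in toM M \<rho>. d x * indicator P x = 0"
    using zero[OF PN(1)] integral_nonneg_eq_0_iff_AE[of "toM M \<rho>" "\<lambda>x. d x * indicator P x"]
      integrable_real_mult_indicator[of P "toM M \<rho>" d] di
    by (auto simp: P_def indicator_def)
  moreover have "AE x in toM M \<rho>. - (d x * indicator N x) = 0"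
    using zero[OF PN(2)] integral_nonneg_eq_0_iff_AE[of "toM M \<rho>" "\<lambda>x. - (d x * indicator N x)"]
      integrable_real_mult_indicator[of N "toM M \<rho>" d] di
    by (auto simp: N_def indicator_def)
  moreover have "AE x in toM M \<rho>. x \<in> space M" using AE_space[of "toM M \<rho>"] by simp
  ultimately show ?thesis
    by eventually_elim (auto simp: P_def N_def d_def indicator_def split: if_splits)
qed

lemma Phi_dens:
  assumes sm: "signed_measure M \<mu>" and pr: "pm M \<rho>" and ac: "abs_cont M \<mu> \<rho>"
    and hd: "has_dens M \<rho> \<mu> h" and fm: "f \<in> borel_measurable M" and fb: "AE x in toM M \<rho>. \<bar>f x\<bar> \<le> K"
  shows "Phi M f \<mu> = (\<integral>x. h x * f x \<partial>toM M \<rho>)" "integrable (toM M \<rho>) (\<lambda>x. h x * f x)"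
proof -
  obtain h' where h': "has_dens M \<rho> \<mu> h'" "integrable (toM M \<rho>) (\<lambda>x. h' x * f x)"
    "Phi M f \<mu> = (\<integral>x. h' x * f x \<partial>toM M \<rho>)"
    using dens_exists[OF sm pr ac] fm fb by blast
  have ae: "AE x in toM M \<rho>. h' x * f x = h x * f x"
    using dens_unique[OF h'(1) hd] by eventually_elim simp
  have m: "(\<lambda>x. h x * f x) \<in> borel_measurable M" "(\<lambda>x. h' x * f x) \<in> borel_measurable M"
    using hd h'(1) fm unfolding has_dens_def by auto
  show "Phi M f \<mu> = (\<integral>x. h x * f x \<partial>toM M \<rho>)" unfolding h'(3)
    by (rule integral_cong_AE) (use m ae in auto)
  show "integrable (toM M \<rho>) (\<lambda>x. h x * f x)"
    using integrable_cong_AE[of "\<lambda>x. h' x * f x" "toM M \<rho>" "\<lambda>x. h x * f x"] m ae h'(2) by auto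
qed


definition dfun :: "'a measure \<Rightarrow> ('a set \<Rightarrow> real) \<Rightarrow> ('a \<Rightarrow> real) \<Rightarrow> 'a set \<Rightarrow> real" where
  "dfun M \<rho> h A = (if A \<in> sets M then (\<integral>x. h x * indicator A x \<partial>toM M \<rho>) else 0)"

context
  fixes M :: "'a measure" and \<rho> :: "'a set \<Rightarrow> real" and h :: "'a \<Rightarrow> real"
  assumes pr: "pm M \<rho>" and hm[measurable]: "h \<in> borel_measurable M" and hi: "integrable (toM M \<rho>) h"
begin

lemma dfun_sm: "signed_measure M (dfun M \<rho> h)"
proof -
  define hp where "hp x = max (h x) 0" for x
  define hn where "hn x = max (- h x) 0" for x
  have m[measurable]: "hp \<in> borel_measurable M" "hn \<in> borel_measurable M" unfolding hp_def hn_def by measurable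
  have i: "integrable (toM M \<rho>) hp" "integrable (toM M \<rho>) hn" unfolding hp_def hn_def using hi by auto
  have p: "pm M (\<lambda>A. if A \<in> sets M then (\<integral>x. hp x * indicator A x \<partial>toM M \<rho>) else 0)"
    by (rule pm_dens[OF pr m(1) _ i(1)]) (simp add: hp_def)
  have n: "pm M (\<lambda>A. if A \<in> sets M then (\<integral>x. hn x * indicator A x \<partial>toM M \<rho>) else 0)"
    by (rule pm_dens[OF pr m(2) _ i(2)]) (simp add: hn_def)
  have eq: "dfun M \<rho> h = (\<lambda>A. 1 * (if A \<in> sets M then (\<integral>x. hp x * indicator A x \<partial>toM M \<rho>) else 0)
      + (-1) * (if A \<in> sets M then (\<integral>x. hn x * indicator A x \<partial>toM M \<rho>) else 0))"
  proof
    fix A show "dfun M \<rho> h A = 1 * (if A \<in> sets M then (\<integral>x. hp x * indicator A x \<partial>toM M \<rho>) else 0)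
      + (-1) * (if A \<in> sets M then (\<integral>x. hn x * indicator A x \<partial>toM M \<rho>) else 0)"
    proof (cases "A \<in> sets M")
      case True
      have "(\<integral>x. h x * indicator A x \<partial>toM M \<rho>) = (\<integral>x. hp x * indicator A x - hn x * indicator A x \<partial>toM M \<rho>)"
        by (rule Bochner_Integration.integral_cong) (auto simp: hp_def hn_def max_def)
      also have "\<dots> = (\<integral>x. hp x * indicator A x \<partial>toM M \<rho>) - (\<integral>x. hn x * indicator A x \<partial>toM M \<rho>)"
        using True i by (intro Bochner_Integration.integral_diff integrable_real_mult_indicator) auto
      finally show ?thesis using True by (simp add: dfun_def)
    qed (simp add: dfun_def)
  qed
  show ?thesis unfolding eq by (intro sm_lin pm_sm p n)
qed

lemma dfun_dens: "has_dens M \<rho> (dfun M \<rho> h) h"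
  unfolding has_dens_def dfun_def using hi by auto

lemma dfun_ac: "abs_cont M (dfun M \<rho> h) \<rho>"
  unfolding abs_cont_def
proof safe
  fix A B assume A: "A \<in> sets M" "\<rho> A = 0" and B: "B \<in> sets M" "B \<subseteq> A"
  have "\<rho> B = 0" using pm_mono[OF pr B(1) A(1) B(2)] pm_nonneg[OF pr, of B] A(2) by simp
  hence "B \<in> null_sets (toM M \<rho>)" using null_toM[OF pr] B(1) by simp
  hence "AE x in toM M \<rho>. x \<notin> B" by (rule AE_not_in)
  hence "AE x in toM M \<rho>. h x * indicator B x = 0" by eventually_elim simp
  hence "(\<integral>x. h x * indicator B x \<partial>toM M \<rho>) = (\<integral>x. 0 \<partial>toM M \<rho>)"
    using B(1) by (intro integral_cong_AE) auto
  thus "dfun M \<rho> h B = 0" using B(1) by (simp add: dfun_def)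
qed

lemma dfun_tv: "tv_norm M (dfun M \<rho> h) \<le> (\<integral>x. \<bar>h x\<bar> \<partial>toM M \<rho>)" "bdd_above (tvset M (dfun M \<rho> h))"
proof -
  have p: "pm M (\<lambda>A. if A \<in> sets M then (\<integral>x. \<bar>h x\<bar> * indicator A x \<partial>toM M \<rho>) else 0)"
    by (rule pm_dens[OF pr]) (use hi in auto)
  have le: "\<bar>dfun M \<rho> h A\<bar> \<le> (if A \<in> sets M then (\<integral>x. \<bar>h x\<bar> * indicator A x \<partial>toM M \<rho>) else 0)"
    if "A \<in> sets M" for A
  proof -
    have e: "(\<lambda>x. \<bar>h x * indicator A x\<bar>) = (\<lambda>x. \<bar>h x\<bar> * indicator A x)" by (auto simp: indicator_def)
    show ?thesis using that integral_abs_bound[of "toM M \<rho>" "\<lambda>x. h x * indicator A x"] unfolding e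
      by (simp add: dfun_def)
  qed
  show "bdd_above (tvset M (dfun M \<rho> h))" by (rule tv_bdd[OF p le])
  have "tv_norm M (dfun M \<rho> h) \<le> (\<integral>x. \<bar>h x\<bar> * indicator (space M) x \<partial>toM M \<rho>)"
    using tv_le[OF p le] by simp
  also have "\<dots> = (\<integral>x. \<bar>h x\<bar> \<partial>toM M \<rho>)"
    by (rule Bochner_Integration.integral_cong) auto
  finally show "tv_norm M (dfun M \<rho> h) \<le> (\<integral>x. \<bar>h x\<bar> \<partial>toM M \<rho>)" .
qed

end

lemma dfun_lin:
  assumes "h1 \<in> borel_measurable M" "integrable (toM M \<rho>) h1" "h2 \<in> borel_measurable M" "integrable (toM M \<rho>) h2"
  shows "dfun M \<rho> (\<lambda>x. a * h1 x + b * h2 x) = (\<lambda>A. a * dfun M \<rho> h1 A + b * dfun M \<rho> h2 A)"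
proof
  fix A show "dfun M \<rho> (\<lambda>x. a * h1 x + b * h2 x) A = a * dfun M \<rho> h1 A + b * dfun M \<rho> h2 A"
  proof (cases "A \<in> sets M")
    case True
    have "(\<integral>x. (a * h1 x + b * h2 x) * indicator A x \<partial>toM M \<rho>) =
        (\<integral>x. a * (h1 x * indicator A x) + b * (h2 x * indicator A x) \<partial>toM M \<rho>)"
      by (rule Bochner_Integration.integral_cong) (auto simp: algebra_simps)
    also have "\<dots> = a * (\<integral>x. h1 x * indicator A x \<partial>toM M \<rho>) + b * (\<integral>x. h2 x * indicator A x \<partial>toM M \<rho>)"
      using True assms by (subst Bochner_Integration.integral_add) (auto intro!: integrable_real_mult_indicator)
    finally show ?thesis using True by (simp add: dfun_def)
  qed (simp add: dfun_def)
qed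

lemma int_bound:
  assumes "finite_measure N" "f \<in> borel_measurable N" "AE x in N. \<bar>f x\<bar> \<le> K" "0 \<le> K"
  shows "\<bar>integral\<^sup>L N f\<bar> \<le> K * measure N (space N)"
proof -
  interpret finite_measure N by fact
  have ic: "integrable N (\<lambda>x. K)" by simp
  have "integrable N f"
    by (rule Bochner_Integration.integrable_bound[OF ic assms(2)]) (use assms(3,4) in auto)
  have "\<bar>integral\<^sup>L N f\<bar> \<le> (\<integral>x. \<bar>f x\<bar> \<partial>N)" by (rule integral_abs_bound)
  also have "\<dots> \<le> (\<integral>x. K \<partial>N)" using \<open>integrable N f\<close> ic assms(3) by (intro integral_mono_AE) auto
  also have "\<dots> = K * measure N (space N)" by simp
  finally show ?thesis .
qed

lemma Phi_bound:
  assumes sm: "signed_measure M \<mu>" and pr: "pm M \<rho>" and ac: "abs_cont M \<mu> \<rho>"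
    and fm: "f \<in> borel_measurable M" and fb: "AE x in toM M \<rho>. \<bar>f x\<bar> \<le> K" and K: "0 \<le> K"
  shows "\<bar>Phi M f \<mu>\<bar> \<le> K * tv_norm M \<mu>"
proof -
  have ae1: "AE x in toM M (jpr M \<mu>). \<bar>f x\<bar> \<le> K"
    by (rule absolutely_continuous_AE[OF _ abs_cont_null[OF pr pm_jpr[OF sm] abs_cont_jpr(1)[OF sm pr ac]] fb]) simp
  have ae2: "AE x in toM M (jnr M \<mu>). \<bar>f x\<bar> \<le> K"
    by (rule absolutely_continuous_AE[OF _ abs_cont_null[OF pr pm_jnr[OF sm] abs_cont_jpr(2)[OF sm pr ac]] fb]) simp
  have b1: "\<bar>integral\<^sup>L (toM M (jpr M \<mu>)) f\<bar> \<le> K * jpr M \<mu> (space M)"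
    using int_bound[OF finite_measure_toM[OF pm_jpr[OF sm]] _ ae1 K] fm measure_toM[OF pm_jpr[OF sm]] by simp
  have b2: "\<bar>integral\<^sup>L (toM M (jnr M \<mu>)) f\<bar> \<le> K * jnr M \<mu> (space M)"
    using int_bound[OF finite_measure_toM[OF pm_jnr[OF sm]] _ ae2 K] fm measure_toM[OF pm_jnr[OF sm]] by simp
  have "\<bar>Phi M f \<mu>\<bar> \<le> K * jpr M \<mu> (space M) + K * jnr M \<mu> (space M)"
    using b1 b2 unfolding Phi_def by linarith
  thus ?thesis using tv_jordan(1)[OF sm] by (simp add: distrib_left)
qed


context
  fixes M :: "'a measure" and Q :: "'a set \<Rightarrow> real" and \<Lambda> :: "('a set \<Rightarrow> real) \<Rightarrow> real" and C :: real
  assumes pQ: "pm M Q" and C: "0 \<le> C"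
    and lin: "\<And>h1 h2 a b. h1 \<in> borel_measurable M \<Longrightarrow> integrable (toM M Q) h1 \<Longrightarrow>
       h2 \<in> borel_measurable M \<Longrightarrow> integrable (toM M Q) h2 \<Longrightarrow>
       \<Lambda> (\<lambda>A. a * dfun M Q h1 A + b * dfun M Q h2 A) = a * \<Lambda> (dfun M Q h1) + b * \<Lambda> (dfun M Q h2)"
    and bnd: "\<And>h. h \<in> borel_measurable M \<Longrightarrow> integrable (toM M Q) h \<Longrightarrow>
       \<bar>\<Lambda> (dfun M Q h)\<bar> \<le> C * tv_norm M (dfun M Q h)"
begin

lemma linD:
  assumes "h1 \<in> borel_measurable M" "integrable (toM M Q) h1" "h2 \<in> borel_measurable M" "integrable (toM M Q) h2"
  shows "\<Lambda> (dfun M Q (\<lambda>x. a * h1 x + b * h2 x)) = a * \<Lambda> (dfun M Q h1) + b * \<Lambda> (dfun M Q h2)"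
  using lin[OF assms] dfun_lin[OF assms] by simp

lemma bnd2:
  assumes "h \<in> borel_measurable M" "integrable (toM M Q) h"
  shows "\<bar>\<Lambda> (dfun M Q h)\<bar> \<le> C * (\<integral>x. \<bar>h x\<bar> \<partial>toM M Q)"
  using bnd[OF assms] dfun_tv(1)[OF pQ assms] C by (meson mult_left_mono order_trans)

lemma ind_int: "A \<in> sets M \<Longrightarrow> integrable (toM M Q) (indicator A :: 'a \<Rightarrow> real)"
  using finite_measure.emeasure_finite[OF finite_measure_toM[OF pQ]] by (simp add: less_top)

lemma ind_meas: "A \<in> sets M \<Longrightarrow> (indicator A :: 'a \<Rightarrow> real) \<in> borel_measurable M"
  by simp

lemma int_ind: "A \<in> sets M \<Longrightarrow> (\<integral>x. indicator A x \<partial>toM M Q) = Q A"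
  using measure_toM[OF pQ] by (simp add: Int_absorb2 sets.sets_into_space)

definition nu :: "'a set \<Rightarrow> real" where
  "nu A = (if A \<in> sets M then \<Lambda> (dfun M Q (indicator A)) else 0)"

lemma nu_add:
  assumes "A \<in> sets M" "B \<in> sets M" "A \<inter> B = {}"
  shows "\<Lambda> (dfun M Q (indicator (A \<union> B))) = \<Lambda> (dfun M Q (indicator A)) + \<Lambda> (dfun M Q (indicator B))"
proof -
  have "(indicator (A \<union> B) :: 'a \<Rightarrow> real) = (\<lambda>x. 1 * indicator A x + 1 * indicator B x)"
    using assms(3) by (intro ext) (auto simp: indicator_def)
  thus ?thesis using linD[OF ind_meas[OF assms(1)] ind_int[OF assms(1)] ind_meas[OF assms(2)] ind_int[OF assms(2)], of 1 1]
    by simp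
qed

lemma nu_bound: "A \<in> sets M \<Longrightarrow> \<bar>\<Lambda> (dfun M Q (indicator A))\<bar> \<le> C * Q A"
  using bnd2[OF ind_meas ind_int, of A] int_ind[of A] by simp

lemma nu_sm: "signed_measure M nu"
  unfolding signed_measure_def
proof safe
  fix A assume "A \<notin> sets M" thus "nu A = 0" by (simp add: nu_def)
next
  fix A :: "nat \<Rightarrow> 'a set" assume disj: "disjoint_family A" and As: "range A \<subseteq> sets M"
  have A[measurable]: "\<And>i. A i \<in> sets M" using As by auto
  define U where "U = (\<Union>n. A n)"
  have U[measurable]: "U \<in> sets M" unfolding U_def by measurable
  define Vn where "Vn n = (\<Union>i<n. A i)" for n
  have Vn[measurable]: "Vn n \<in> sets M" for n unfolding Vn_def by measurable
  have fin: "(\<Sum>i<n. nu (A i)) = \<Lambda> (dfun M Q (indicator (Vn n)))" for n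
  proof (induction n)
    case 0
    have "(indicator {} :: 'a \<Rightarrow> real) = (\<lambda>x. 0 * indicator {} x + 0 * indicator {} x)" by (simp add: fun_eq_iff)
    hence "\<Lambda> (dfun M Q (indicator {})) = 0"
      using linD[OF ind_meas ind_int ind_meas ind_int, of "{}" "{}" 0 0] by simp
    moreover have "(indicator {} :: 'a \<Rightarrow> real) = (\<lambda>x. 0)" by (simp add: fun_eq_iff)
    ultimately show ?case by (simp add: Vn_def)
  next
    case (Suc n)
    have "Vn (Suc n) = Vn n \<union> A n" by (auto simp: Vn_def lessThan_Suc)
    moreover have "Vn n \<inter> A n = {}"
    proof -
      { fix i assume "i < n" hence "A i \<inter> A n = {}" using disj unfolding disjoint_family_on_def by simp }
      thus ?thesis by (auto simp: Vn_def)
    qed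
    ultimately have "\<Lambda> (dfun M Q (indicator (Vn (Suc n)))) = \<Lambda> (dfun M Q (indicator (Vn n))) + \<Lambda> (dfun M Q (indicator (A n)))"
      using nu_add[OF Vn A] by simp
    thus ?case using Suc.IH by (simp add: nu_def)
  qed
  have QS: "(\<lambda>n. Q (A n)) sums Q U" unfolding U_def by (rule sm_countable[OF pm_sm[OF pQ] disj As])
  have Qfin: "Q (Vn n) = (\<Sum>i<n. Q (A i))" for n unfolding Vn_def by (rule sm_finite_union[OF pm_sm[OF pQ] A disj])
  have UnU: "Vn n \<subseteq> U" for n by (auto simp: Vn_def U_def)
  have tail: "\<bar>(\<Sum>i<n. nu (A i)) - nu U\<bar> \<le> C * (Q U - (\<Sum>i<n. Q (A i)))" for n
  proof -
    have "\<Lambda> (dfun M Q (indicator U)) = \<Lambda> (dfun M Q (indicator (Vn n))) + \<Lambda> (dfun M Q (indicator (U - Vn n)))"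
      using nu_add[OF Vn[of n], of "U - Vn n"] UnU[of n] by (simp add: Un_Diff_cancel2 sup.absorb2)
    moreover have "\<bar>\<Lambda> (dfun M Q (indicator (U - Vn n)))\<bar> \<le> C * Q (U - Vn n)" by (rule nu_bound) simp
    moreover have "Q (U - Vn n) = Q U - (\<Sum>i<n. Q (A i))"
      using sm_diff[OF pm_sm[OF pQ] U Vn UnU] Qfin by simp
    ultimately show ?thesis using fin[of n] by (simp add: nu_def)
  qed
  have "(\<lambda>n. C * (Q U - (\<Sum>i<n. Q (A i)))) \<longlonglongrightarrow> C * (Q U - Q U)"
    using QS unfolding sums_def by (intro tendsto_intros)
  hence lim0: "(\<lambda>n. C * (Q U - (\<Sum>i<n. Q (A i)))) \<longlonglongrightarrow> 0" by simp
  have ev: "eventually (\<lambda>n. norm ((\<Sum>i<n. nu (A i)) - nu U) \<le> C * (Q U - (\<Sum>i<n. Q (A i)))) sequentially"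
    by (rule always_eventually) (use tail in \<open>simp add: real_norm_def\<close>)
  have "(\<lambda>n. (\<Sum>i<n. nu (A i)) - nu U) \<longlonglongrightarrow> 0"
    by (rule Lim_null_comparison[OF ev lim0])
  hence "(\<lambda>n. \<Sum>i<n. nu (A i)) \<longlonglongrightarrow> nu U" by (rule LIM_zero_cancel)
  thus "(\<lambda>n. nu (A n)) sums nu (\<Union> (range A))" unfolding sums_def U_def by simp
qed

lemma nu_ac: "abs_cont M nu Q"
  unfolding abs_cont_def
proof safe
  fix A B assume A: "A \<in> sets M" "Q A = 0" and B: "B \<in> sets M" "B \<subseteq> A"
  have "Q B = 0" using pm_mono[OF pQ B(1) A(1) B(2)] pm_nonneg[OF pQ, of B] A(2) by simp
  thus "nu B = 0" using nu_bound[OF B(1)] B(1) by (simp add: nu_def)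
qed

lemma exists_g: "\<exists>g. g \<in> borel_measurable M \<and> (\<forall>x. \<bar>g x\<bar> \<le> C) \<and> has_dens M Q nu g"
proof -
  obtain g0 where hd: "has_dens M Q nu g0" using dens_exists[OF nu_sm pQ nu_ac] by blast
  have g0m[measurable]: "g0 \<in> borel_measurable M" and g0i: "integrable (toM M Q) g0"
    and g0A: "\<And>A. A \<in> sets M \<Longrightarrow> nu A = (\<integral>x. g0 x * indicator A x \<partial>toM M Q)"
    using hd unfolding has_dens_def by auto
  define P where "P = {x \<in> space M. C < g0 x}"
  define N where "N = {x \<in> space M. g0 x < - C}"
  have PN[measurable]: "P \<in> sets M" "N \<in> sets M" unfolding P_def N_def by measurable
  have ip: "integrable (toM M Q) (\<lambda>x. (g0 x - C) * indicator P x)"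
    using g0i ind_int[OF PN(1)] PN(1) by (auto simp: left_diff_distrib intro!: Bochner_Integration.integrable_diff integrable_real_mult_indicator integrable_mult_right)
  have "(\<integral>x. (g0 x - C) * indicator P x \<partial>toM M Q) = (\<integral>x. g0 x * indicator P x \<partial>toM M Q) - C * (\<integral>x. indicator P x \<partial>toM M Q)"
    using g0i ind_int[OF PN(1)] by (simp add: left_diff_distrib Bochner_Integration.integral_diff integrable_real_mult_indicator)
  also have "\<dots> = nu P - C * Q P" using g0A[OF PN(1)] int_ind[OF PN(1)] by simp
  also have "\<dots> \<le> 0" using nu_bound[OF PN(1)] PN(1) by (simp add: nu_def)
  finally have "(\<integral>x. (g0 x - C) * indicator P x \<partial>toM M Q) \<le> 0" .
  moreover have "0 \<le> (\<integral>x. (g0 x - C) * indicator P x \<partial>toM M Q)"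
    by (intro integral_nonneg_AE) (auto simp: P_def indicator_def)
  ultimately have "(\<integral>x. (g0 x - C) * indicator P x \<partial>toM M Q) = 0" by simp
  hence aeP: "AE x in toM M Q. (g0 x - C) * indicator P x = 0"
    using integral_nonneg_eq_0_iff_AE[OF ip] by (auto simp: P_def indicator_def)
  have iN: "integrable (toM M Q) (\<lambda>x. (- C - g0 x) * indicator N x)"
    using g0i ind_int[OF PN(2)] by (auto simp: left_diff_distrib intro!: integrable_real_mult_indicator)
  have "(\<integral>x. (- C - g0 x) * indicator N x \<partial>toM M Q) = - C * (\<integral>x. indicator N x \<partial>toM M Q) - (\<integral>x. g0 x * indicator N x \<partial>toM M Q)"
    using g0i ind_int[OF PN(2)] by (simp add: left_diff_distrib Bochner_Integration.integral_diff integrable_real_mult_indicator)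
  also have "\<dots> = - C * Q N - nu N" using g0A[OF PN(2)] int_ind[OF PN(2)] by simp
  also have "\<dots> \<le> 0" using nu_bound[OF PN(2)] PN(2) by (simp add: nu_def)
  finally have "(\<integral>x. (- C - g0 x) * indicator N x \<partial>toM M Q) \<le> 0" .
  moreover have "0 \<le> (\<integral>x. (- C - g0 x) * indicator N x \<partial>toM M Q)"
    by (intro integral_nonneg_AE) (auto simp: N_def indicator_def)
  ultimately have "(\<integral>x. (- C - g0 x) * indicator N x \<partial>toM M Q) = 0" by simp
  hence aeN: "AE x in toM M Q. (- C - g0 x) * indicator N x = 0"
    using integral_nonneg_eq_0_iff_AE[OF iN] by (auto simp: N_def indicator_def)
  have sp: "AE x in toM M Q. x \<in> space M" using AE_space[of "toM M Q"] by simp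
  have ae: "AE x in toM M Q. \<bar>g0 x\<bar> \<le> C"
    using aeP aeN sp by eventually_elim (auto simp: P_def N_def indicator_def split: if_splits)
  define g where "g x = max (- C) (min C (g0 x))" for x
  have gm[measurable]: "g \<in> borel_measurable M" unfolding g_def by measurable
  have aeg: "AE x in toM M Q. g x = g0 x" using ae by eventually_elim (auto simp: g_def)
  have gi: "integrable (toM M Q) g"
    using integrable_cong_AE[of g0 "toM M Q" g] aeg g0i by (auto simp: eq_commute)
  have "nu A = (\<integral>x. g x * indicator A x \<partial>toM M Q)" if "A \<in> sets M" for A
  proof -
    have "(\<integral>x. g x * indicator A x \<partial>toM M Q) = (\<integral>x. g0 x * indicator A x \<partial>toM M Q)"
      by (rule integral_cong_AE) (use aeg that in \<open>auto intro!: borel_measurable_times borel_measurable_indicator\<close>)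
    thus ?thesis using g0A[OF that] by simp
  qed
  moreover have "\<forall>x. \<bar>g x\<bar> \<le> C" using C by (auto simp: g_def)
  ultimately show ?thesis using gm gi unfolding has_dens_def by blast
qed

lemma rep: "\<exists>g. g \<in> borel_measurable M \<and> (\<forall>x. \<bar>g x\<bar> \<le> C) \<and>
   (\<forall>h. h \<in> borel_measurable M \<longrightarrow> integrable (toM M Q) h \<longrightarrow> \<Lambda> (dfun M Q h) = (\<integral>x. g x * h x \<partial>toM M Q))"
proof -
  obtain g where gm[measurable]: "g \<in> borel_measurable M" and gb: "\<forall>x. \<bar>g x\<bar> \<le> C" and gd: "has_dens M Q nu g"
    using exists_g by blast
  have gint: "integrable (toM M Q) (\<lambda>x. g x * h x)" if "integrable (toM M Q) h" for h
  proof (rule Bochner_Integration.integrable_bound[of _ "\<lambda>x. C * h x"])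
    show "integrable (toM M Q) (\<lambda>x. C * h x)" using that by simp
    show "(\<lambda>x. g x * h x) \<in> borel_measurable (toM M Q)" using that borel_measurable_integrable[OF that] by simp
    show "AE x in toM M Q. norm (g x * h x) \<le> norm (C * h x)"
      using gb C by (auto simp: abs_mult intro!: mult_right_mono)
  qed
  have meas: "h \<in> borel_measurable M" if "integrable (toM M Q) h" for h :: "'a \<Rightarrow> real"
    using borel_measurable_integrable[OF that] by simp
  have main: "\<Lambda> (dfun M Q h) = (\<integral>x. g x * h x \<partial>toM M Q)" if "integrable (toM M Q) h" for h :: "'a \<Rightarrow> real"
    using that
  proof (induct rule: integrable_induct)
    case (base A c)
    hence A: "A \<in> sets M" by simp
    have e: "(\<lambda>x. indicator A x *\<^sub>R c) = (\<lambda>x. c * indicator A x + 0 * indicator A x)"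
      by (auto simp: fun_eq_iff)
    have "\<Lambda> (dfun M Q (\<lambda>x. indicator A x *\<^sub>R c)) = c * nu A"
      unfolding e using linD[OF ind_meas[OF A] ind_int[OF A] ind_meas[OF A] ind_int[OF A], of c 0] A
      by (simp add: nu_def)
    also have "\<dots> = c * (\<integral>x. g x * indicator A x \<partial>toM M Q)" using gd A unfolding has_dens_def by simp
    also have "\<dots> = (\<integral>x. c * (g x * indicator A x) \<partial>toM M Q)" by simp
    also have "\<dots> = (\<integral>x. g x * (indicator A x *\<^sub>R c) \<partial>toM M Q)"
      by (rule Bochner_Integration.integral_cong) auto
    finally show ?case .
  next
    case (add f h)
    have "\<Lambda> (dfun M Q (\<lambda>x. f x + h x)) = \<Lambda> (dfun M Q (\<lambda>x. 1 * f x + 1 * h x))" by simp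
    also have "\<dots> = \<Lambda> (dfun M Q f) + \<Lambda> (dfun M Q h)"
      using linD[OF meas[OF add(1)] add(1) meas[OF add(3)] add(3), of 1 1] by simp
    also have "\<dots> = (\<integral>x. g x * f x \<partial>toM M Q) + (\<integral>x. g x * h x \<partial>toM M Q)" using add by simp
    also have "\<dots> = (\<integral>x. g x * (f x + h x) \<partial>toM M Q)"
      using gint[OF add(1)] gint[OF add(3)] by (simp add: distrib_left)
    finally show ?case .
  next
    case (lim f s)
    have fm[measurable]: "f \<in> borel_measurable M" using meas[OF lim(5)] .
    have sm[measurable]: "s i \<in> borel_measurable M" for i using meas[OF lim(1)] .
    have L1: "(\<lambda>i. \<integral>x. \<bar>s i x - f x\<bar> \<partial>toM M Q) \<longlonglongrightarrow> (\<integral>x. 0 \<partial>toM M Q)"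
    proof (rule integral_dominated_convergence[where w="\<lambda>x. 3 * \<bar>f x\<bar>"])
      show "integrable (toM M Q) (\<lambda>x. 3 * \<bar>f x\<bar>)" using lim(5) by simp
      show "AE x in toM M Q. (\<lambda>i. \<bar>s i x - f x\<bar>) \<longlonglongrightarrow> 0"
      proof (rule AE_I2)
        fix x assume "x \<in> space (toM M Q)"
        hence "(\<lambda>i. s i x) \<longlonglongrightarrow> f x" using lim(3) by simp
        hence "(\<lambda>i. s i x - f x) \<longlonglongrightarrow> 0" by (rule LIM_zero)
        thus "(\<lambda>i. \<bar>s i x - f x\<bar>) \<longlonglongrightarrow> 0" by (rule tendsto_rabs_zero)
      qed
      show "AE x in toM M Q. norm \<bar>s i x - f x\<bar> \<le> 3 * \<bar>f x\<bar>" for i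
      proof (rule AE_I2)
        fix x assume "x \<in> space (toM M Q)"
        hence "\<bar>s i x\<bar> \<le> 2 * \<bar>f x\<bar>" using lim(4)[of x i] by simp
        thus "norm \<bar>s i x - f x\<bar> \<le> 3 * \<bar>f x\<bar>" by simp
      qed
    qed simp_all
    have bd: "\<bar>\<Lambda> (dfun M Q (s i)) - \<Lambda> (dfun M Q f)\<bar> \<le> C * (\<integral>x. \<bar>s i x - f x\<bar> \<partial>toM M Q)" for i
    proof -
      have "\<Lambda> (dfun M Q (\<lambda>x. 1 * s i x + (-1) * f x)) = \<Lambda> (dfun M Q (s i)) - \<Lambda> (dfun M Q f)"
        using linD[OF sm[of i] lim(1)[of i] fm lim(5), of 1 "-1"] by simp
      moreover have "\<bar>\<Lambda> (dfun M Q (\<lambda>x. 1 * s i x + (-1) * f x))\<bar> \<le> C * (\<integral>x. \<bar>1 * s i x + (-1) * f x\<bar> \<partial>toM M Q)"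
        by (rule bnd2) (use lim(1,5) in auto)
      ultimately show ?thesis by simp
    qed
    have "(\<lambda>i. C * (\<integral>x. \<bar>s i x - f x\<bar> \<partial>toM M Q)) \<longlonglongrightarrow> 0"
      using tendsto_mult_right_zero[OF L1[simplified]] by (simp add: mult.commute)
    hence "(\<lambda>i. \<Lambda> (dfun M Q (s i)) - \<Lambda> (dfun M Q f)) \<longlonglongrightarrow> 0"
      by (rule Lim_null_comparison[rotated]) (use bd in simp)
    hence lim1: "(\<lambda>i. \<Lambda> (dfun M Q (s i))) \<longlonglongrightarrow> \<Lambda> (dfun M Q f)" by (rule LIM_zero_cancel)
    have lim2: "(\<lambda>i. \<integral>x. g x * s i x \<partial>toM M Q) \<longlonglongrightarrow> (\<integral>x. g x * f x \<partial>toM M Q)"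
    proof (rule integral_dominated_convergence[where w="\<lambda>x. 2 * C * \<bar>f x\<bar>"])
      show "integrable (toM M Q) (\<lambda>x. 2 * C * \<bar>f x\<bar>)" using lim(5) by simp
      show "AE x in toM M Q. (\<lambda>i. g x * s i x) \<longlonglongrightarrow> g x * f x"
      proof (rule AE_I2)
        fix x assume "x \<in> space (toM M Q)"
        hence "(\<lambda>i. s i x) \<longlonglongrightarrow> f x" using lim(3) by simp
        thus "(\<lambda>i. g x * s i x) \<longlonglongrightarrow> g x * f x" by (intro tendsto_intros)
      qed
      show "AE x in toM M Q. norm (g x * s i x) \<le> 2 * C * \<bar>f x\<bar>" for i
      proof (rule AE_I2)
        fix x assume "x \<in> space (toM M Q)"
        hence "\<bar>s i x\<bar> \<le> 2 * \<bar>f x\<bar>" using lim(4)[of x i] by simp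
        moreover have "\<bar>g x\<bar> \<le> C" using gb by simp
        ultimately have "\<bar>g x\<bar> * \<bar>s i x\<bar> \<le> C * (2 * \<bar>f x\<bar>)" by (intro mult_mono) auto
        thus "norm (g x * s i x) \<le> 2 * C * \<bar>f x\<bar>" by (simp add: abs_mult)
      qed
    qed simp_all
    have "(\<lambda>i. \<Lambda> (dfun M Q (s i))) = (\<lambda>i. \<integral>x. g x * s i x \<partial>toM M Q)" using lim(2) by simp
    thus ?case using lim1 lim2 LIMSEQ_unique by metis
  qed
  show ?thesis using gm gb main by blast
qed

end


lemma prob_pm: "prob_measure M P \<Longrightarrow> pm M P"
  unfolding prob_measure_def pm_def by auto

lemma sm_zero: "signed_measure M (\<lambda>A. 0)"
  unfolding signed_measure_def by auto

lemma sm_sum: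
  fixes n :: nat
  assumes "\<And>i. i < n \<Longrightarrow> signed_measure M (\<mu> i)"
  shows "signed_measure M (\<lambda>A. \<Sum>i<n. c i * \<mu> i A)"
  using assms
proof (induction n)
  case 0 thus ?case using sm_zero by simp
next
  case (Suc n)
  have "signed_measure M (\<lambda>A. 1 * (\<Sum>i<n. c i * \<mu> i A) + c n * \<mu> n A)"
    using Suc by (intro sm_lin) auto
  thus ?case by simp
qed

definition polar_null :: "'a measure \<Rightarrow> ('a set \<Rightarrow> real) set \<Rightarrow> ('a set \<Rightarrow> real) \<Rightarrow> bool" where
  "polar_null M \<P> \<rho> \<longleftrightarrow> (\<forall>N\<in>sets M. (\<forall>P\<in>\<P>. P N = 0) \<longrightarrow> \<rho> N = 0)"

lemma mconv_pm:
  assumes allP: "\<forall>P\<in>\<P>. prob_measure M P" and R: "R \<in> mconv \<P>"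
  shows "pm M R" "polar_null M \<P> R"
proof -
  obtain n c p where R: "R = (\<lambda>A. \<Sum>i<(n::nat). c i * p i A)" and cp: "\<forall>i<n. 0 \<le> c i \<and> p i \<in> \<P>"
    using R unfolding mconv_def by blast
  have "signed_measure M R" unfolding R
    by (rule sm_sum) (use cp allP in \<open>auto simp: prob_measure_def\<close>)
  moreover have "0 \<le> R A" if "A \<in> sets M" for A
    unfolding R using cp allP that by (auto intro!: sum_nonneg mult_nonneg_nonneg simp: prob_measure_def)
  ultimately show "pm M R" unfolding pm_def by auto
  show "polar_null M \<P> R" unfolding polar_null_def R using cp by (auto intro!: sum.neutral)
qed

lemma P_in_mconv: "P \<in> \<P> \<Longrightarrow> P \<in> mconv \<P>"
  unfolding mconv_def
  by (rule CollectI, rule exI[of _ "1::nat"], rule exI[of _ "\<lambda>_. 1"], rule exI[of _ "\<lambda>_. P"]) auto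

lemma ca_two:
  assumes allP: "\<forall>P\<in>\<P>. prob_measure M P" and "\<mu> \<in> ca M (mconv \<P>)" "\<nu> \<in> ca M (mconv \<P>)"
  shows "\<exists>\<rho>. pm M \<rho> \<and> polar_null M \<P> \<rho> \<and> abs_cont M \<mu> \<rho> \<and> abs_cont M \<nu> \<rho>"
proof -
  obtain R1 R2 where R: "R1 \<in> mconv \<P>" "R2 \<in> mconv \<P>" "abs_cont M \<mu> R1" "abs_cont M \<nu> R2"
    using assms unfolding ca_def by blast
  note p1 = mconv_pm[OF allP R(1)] and p2 = mconv_pm[OF allP R(2)]
  have "pm M (\<lambda>A. R1 A + R2 A)" by (rule pm_add[OF p1(1) p2(1)])
  moreover have "polar_null M \<P> (\<lambda>A. R1 A + R2 A)" using p1(2) p2(2) unfolding polar_null_def by auto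
  moreover have "abs_cont M \<mu> (\<lambda>A. R1 A + R2 A)" "abs_cont M \<nu> (\<lambda>A. R1 A + R2 A)"
    using R(3,4) pm_nonneg[OF p1(1)] pm_nonneg[OF p2(1)] unfolding abs_cont_def
    by (metis add_nonneg_eq_0_iff)+
  ultimately show ?thesis by blast
qed

lemma ca_one:
  assumes allP: "\<forall>P\<in>\<P>. prob_measure M P" and "\<mu> \<in> ca M (mconv \<P>)"
  shows "signed_measure M \<mu> \<and> (\<exists>\<rho>. pm M \<rho> \<and> polar_null M \<P> \<rho> \<and> abs_cont M \<mu> \<rho>)"
  using assms mconv_pm[OF allP] unfolding ca_def by blast

lemma qs_AE:
  assumes "qs M \<P> \<phi>" "pm M \<rho>" "polar_null M \<P> \<rho>"
  shows "AE x in toM M \<rho>. \<phi> x"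
proof -
  obtain N where N: "N \<in> sets M" "\<forall>P\<in>\<P>. P N = 0" "{x\<in>space M. \<not> \<phi> x} \<subseteq> N"
    using assms(1) unfolding qs_def by blast
  have "N \<in> null_sets (toM M \<rho>)" using N assms(3) null_toM[OF assms(2)] unfolding polar_null_def by auto
  thus ?thesis by (rule AE_I') (use N(3) in simp)
qed

lemma Linf_AE:
  assumes "f \<in> Linf M \<P>" "pm M \<rho>" "polar_null M \<P> \<rho>"
  shows "\<exists>K\<ge>0. AE x in toM M \<rho>. \<bar>f x\<bar> \<le> K"
proof -
  obtain K where K: "qs M \<P> (\<lambda>x. \<bar>f x\<bar> \<le> K)" using assms(1) unfolding Linf_def by blast
  have "AE x in toM M \<rho>. \<bar>f x\<bar> \<le> K" by (rule qs_AE[OF K assms(2,3)])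
  hence "AE x in toM M \<rho>. \<bar>f x\<bar> \<le> max K 0" by eventually_elim simp
  thus ?thesis by (intro exI[of _ "max K 0"]) auto
qed

lemma Linf_meas: "f \<in> Linf M \<P> \<Longrightarrow> f \<in> borel_measurable M"
  unfolding Linf_def by auto


lemma C1_lin:
  assumes allP: "\<forall>P\<in>\<P>. prob_measure M P" and f: "f \<in> Linf M \<P>"
    and mu: "\<mu> \<in> ca M (mconv \<P>)" and nu: "\<nu> \<in> ca M (mconv \<P>)"
  shows "Phi M f (\<lambda>A. a * \<mu> A + b * \<nu> A) = a * Phi M f \<mu> + b * Phi M f \<nu>"
proof -
  obtain \<rho> where r: "pm M \<rho>" "polar_null M \<P> \<rho>" "abs_cont M \<mu> \<rho>" "abs_cont M \<nu> \<rho>"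
    using ca_two[OF allP mu nu] by blast
  have smu: "signed_measure M \<mu>" and snu: "signed_measure M \<nu>" using mu nu unfolding ca_def by auto
  obtain K where K: "AE x in toM M \<rho>. \<bar>f x\<bar> \<le> K" using Linf_AE[OF f r(1,2)] by blast
  have fm: "f \<in> borel_measurable M" using Linf_meas[OF f] .
  obtain h1 where h1: "has_dens M \<rho> \<mu> h1" using dens_exists[OF smu r(1,3)] by blast
  obtain h2 where h2: "has_dens M \<rho> \<nu> h2" using dens_exists[OF snu r(1,4)] by blast
  have hd: "has_dens M \<rho> (\<lambda>A. a * \<mu> A + b * \<nu> A) (\<lambda>x. a * h1 x + b * h2 x)"
    unfolding has_dens_def
  proof (intro conjI ballI)
    show "(\<lambda>x. a * h1 x + b * h2 x) \<in> borel_measurable M" using h1 h2 unfolding has_dens_def by auto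
    show "integrable (toM M \<rho>) (\<lambda>x. a * h1 x + b * h2 x)" using h1 h2 unfolding has_dens_def by auto
    fix A assume A: "A \<in> sets M"
    have "(\<integral>x. (a * h1 x + b * h2 x) * indicator A x \<partial>toM M \<rho>) =
        (\<integral>x. a * (h1 x * indicator A x) + b * (h2 x * indicator A x) \<partial>toM M \<rho>)"
      by (rule Bochner_Integration.integral_cong) (auto simp: algebra_simps)
    also have "\<dots> = a * (\<integral>x. h1 x * indicator A x \<partial>toM M \<rho>) + b * (\<integral>x. h2 x * indicator A x \<partial>toM M \<rho>)"
      using A h1 h2 unfolding has_dens_def
      by (subst Bochner_Integration.integral_add) (auto intro!: integrable_real_mult_indicator)
    also have "\<dots> = a * \<mu> A + b * \<nu> A" using A h1 h2 unfolding has_dens_def by simp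
    finally show "a * \<mu> A + b * \<nu> A = (\<integral>x. (a * h1 x + b * h2 x) * indicator A x \<partial>toM M \<rho>)" by simp
  qed
  have sl: "signed_measure M (\<lambda>A. a * \<mu> A + b * \<nu> A)" by (rule sm_lin[OF smu snu])
  have acl: "abs_cont M (\<lambda>A. a * \<mu> A + b * \<nu> A) \<rho>" using r(3,4) unfolding abs_cont_def by auto
  note P1 = Phi_dens[OF smu r(1,3) h1 fm K] and P2 = Phi_dens[OF snu r(1,4) h2 fm K]
    and P3 = Phi_dens[OF sl r(1) acl hd fm K]
  have "Phi M f (\<lambda>A. a * \<mu> A + b * \<nu> A) = (\<integral>x. a * (h1 x * f x) + b * (h2 x * f x) \<partial>toM M \<rho>)"
    unfolding P3(1) by (rule Bochner_Integration.integral_cong) (auto simp: algebra_simps)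
  also have "\<dots> = a * Phi M f \<mu> + b * Phi M f \<nu>"
    unfolding P1(1) P2(1) using P1(2) P2(2) by simp
  finally show ?thesis .
qed

lemma Linf_bound:
  assumes allP: "\<forall>P\<in>\<P>. prob_measure M P" and f: "f \<in> Linf M \<P>"
    and K: "qs M \<P> (\<lambda>x. \<bar>f x\<bar> \<le> K)" "0 \<le> K" and mu: "\<mu> \<in> ca M (mconv \<P>)"
  shows "\<bar>Phi M f \<mu>\<bar> \<le> K * tv_norm M \<mu>"
proof -
  obtain \<rho> where r: "pm M \<rho>" "polar_null M \<P> \<rho>" "abs_cont M \<mu> \<rho>" and sm: "signed_measure M \<mu>"
    using ca_one[OF allP mu] by blast
  show ?thesis by (rule Phi_bound[OF sm r(1,3) Linf_meas[OF f] qs_AE[OF K(1) r(1,2)] K(2)])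
qed

lemma C1:
  assumes allP: "\<forall>P\<in>\<P>. prob_measure M P" and f: "f \<in> Linf M \<P>"
  shows "ca_dual M (mconv \<P>) (Phi M f)"
proof -
  obtain K where K: "qs M \<P> (\<lambda>x. \<bar>f x\<bar> \<le> K)" using f unfolding Linf_def by blast
  have K': "qs M \<P> (\<lambda>x. \<bar>f x\<bar> \<le> max K 0)" using K unfolding qs_def by force
  show ?thesis unfolding ca_dual_def
  proof (intro conjI ballI allI)
    show "\<exists>C. \<forall>\<mu>\<in>ca M (mconv \<P>). \<bar>Phi M f \<mu>\<bar> \<le> C * tv_norm M \<mu>"
      using Linf_bound[OF allP f K'] by (intro exI[of _ "max K 0"]) auto
  qed (use C1_lin[OF allP f] in auto)
qed

lemma C2:
  assumes allP: "\<forall>P\<in>\<P>. prob_measure M P" and f: "f \<in> Linf M \<P>" and g: "g \<in> Linf M \<P>"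
    and mu: "\<mu> \<in> ca M (mconv \<P>)"
  shows "Phi M (\<lambda>x. a * f x + b * g x) \<mu> = a * Phi M f \<mu> + b * Phi M g \<mu>"
proof -
  obtain \<rho> where r: "pm M \<rho>" "polar_null M \<P> \<rho>" "abs_cont M \<mu> \<rho>" and sm: "signed_measure M \<mu>"
    using ca_one[OF allP mu] by blast
  obtain K1 where K1: "AE x in toM M \<rho>. \<bar>f x\<bar> \<le> K1" using Linf_AE[OF f r(1,2)] by blast
  obtain K2 where K2: "AE x in toM M \<rho>. \<bar>g x\<bar> \<le> K2" using Linf_AE[OF g r(1,2)] by blast
  have fm: "f \<in> borel_measurable M" "g \<in> borel_measurable M" using Linf_meas f g by auto
  have K3: "AE x in toM M \<rho>. \<bar>a * f x + b * g x\<bar> \<le> \<bar>a\<bar> * K1 + \<bar>b\<bar> * K2"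
    using K1 K2
  proof eventually_elim
    case (elim x)
    have "\<bar>a * f x + b * g x\<bar> \<le> \<bar>a\<bar> * \<bar>f x\<bar> + \<bar>b\<bar> * \<bar>g x\<bar>" by (metis abs_mult abs_triangle_ineq)
    also have "\<dots> \<le> \<bar>a\<bar> * K1 + \<bar>b\<bar> * K2" using elim by (intro add_mono mult_left_mono) auto
    finally show ?case .
  qed
  have fm3: "(\<lambda>x. a * f x + b * g x) \<in> borel_measurable M" using fm by measurable
  obtain h where h: "has_dens M \<rho> \<mu> h" using dens_exists[OF sm r(1,3)] by blast
  note P1 = Phi_dens[OF sm r(1,3) h fm(1) K1] and P2 = Phi_dens[OF sm r(1,3) h fm(2) K2]
    and P3 = Phi_dens[OF sm r(1,3) h fm3 K3]
  have "Phi M (\<lambda>x. a * f x + b * g x) \<mu> = (\<integral>x. a * (h x * f x) + b * (h x * g x) \<partial>toM M \<rho>)"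
    unfolding P3(1) by (rule Bochner_Integration.integral_cong) (auto simp: algebra_simps)
  also have "\<dots> = a * Phi M f \<mu> + b * Phi M g \<mu>"
    unfolding P1(1) P2(1) using P1(2) P2(2) by simp
  finally show ?thesis .
qed


lemma test_measure:
  assumes allP: "\<forall>P\<in>\<P>. prob_measure M P" and P: "P \<in> \<P>" and D: "D \<in> sets M" and f: "f \<in> Linf M \<P>"
  shows "dfun M P (indicator D) \<in> ca M (mconv \<P>)"
    and "Phi M f (dfun M P (indicator D)) = (\<integral>x. indicator D x * f x \<partial>toM M P)"
    and "integrable (toM M P) (\<lambda>x. indicator D x * f x)"
    and "tv_norm M (dfun M P (indicator D)) \<le> P D"
proof -
  have pP: "pm M P" using allP P prob_pm by blast
  have pnP: "polar_null M \<P> P" using P unfolding polar_null_def by auto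
  have im: "(indicator D :: 'a \<Rightarrow> real) \<in> borel_measurable M" using D by simp
  have ii: "integrable (toM M P) (indicator D :: 'a \<Rightarrow> real)"
    using finite_measure.emeasure_finite[OF finite_measure_toM[OF pP]] D by (simp add: less_top)
  note sm = dfun_sm[OF pP im ii] and ac = dfun_ac[OF pP im ii] and hd = dfun_dens[OF pP im ii]
  show "dfun M P (indicator D) \<in> ca M (mconv \<P>)"
    unfolding ca_def using sm ac P_in_mconv[OF P] by blast
  obtain K where K: "AE x in toM M P. \<bar>f x\<bar> \<le> K" using Linf_AE[OF f pP pnP] by blast
  note PD = Phi_dens[OF sm pP ac hd Linf_meas[OF f] K]
  show "Phi M f (dfun M P (indicator D)) = (\<integral>x. indicator D x * f x \<partial>toM M P)" by (rule PD(1))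
  show "integrable (toM M P) (\<lambda>x. indicator D x * f x)" by (rule PD(2))
  have "tv_norm M (dfun M P (indicator D)) \<le> (\<integral>x. \<bar>indicator D x :: real\<bar> \<partial>toM M P)"
    by (rule dfun_tv(1)[OF pP im ii])
  also have "\<dots> = P D" using measure_toM[OF pP] D by (simp add: Int_absorb2 sets.sets_into_space)
  finally show "tv_norm M (dfun M P (indicator D)) \<le> P D" .
qed

lemma int_zero_null:
  fixes u :: "'a \<Rightarrow> real"
  assumes pP: "pm M P" and D: "D \<in> sets M" and um: "u \<in> borel_measurable M"
    and ui: "integrable (toM M P) (\<lambda>x. indicator D x * u x)" and pos: "\<And>x. x \<in> D \<Longrightarrow> 0 < u x"
    and z: "(\<integral>x. indicator D x * u x \<partial>toM M P) \<le> 0"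
  shows "P D = 0"
proof -
  have "0 \<le> indicator D x * u x" for x using pos[of x] by (cases "x \<in> D") auto
  hence nn: "AE x in toM M P. 0 \<le> indicator D x * u x" by simp
  have "0 \<le> (\<integral>x. indicator D x * u x \<partial>toM M P)" using nn by (rule integral_nonneg_AE)
  hence "(\<integral>x. indicator D x * u x \<partial>toM M P) = 0" using z by simp
  hence "AE x in toM M P. indicator D x * u x = 0" using integral_nonneg_eq_0_iff_AE[OF ui nn] by simp
  hence "AE x in toM M P. x \<notin> D" by eventually_elim (use pos in \<open>fastforce simp: indicator_def\<close>)
  hence "D \<in> null_sets (toM M P)" using AE_iff_null_sets[of D "toM M P"] D by simp
  thus ?thesis using null_toM[OF pP] by simp
qed

lemma C3:
  assumes allP: "\<forall>P\<in>\<P>. prob_measure M P" and f: "f \<in> Linf M \<P>" and g: "g \<in> Linf M \<P>"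
  shows "(\<forall>\<mu>\<in>ca M (mconv \<P>). Phi M f \<mu> = Phi M g \<mu>) \<longleftrightarrow> qs M \<P> (\<lambda>x. f x = g x)"
proof
  assume q: "qs M \<P> (\<lambda>x. f x = g x)"
  show "\<forall>\<mu>\<in>ca M (mconv \<P>). Phi M f \<mu> = Phi M g \<mu>"
  proof
    fix \<mu> assume mu: "\<mu> \<in> ca M (mconv \<P>)"
    obtain \<rho> where r: "pm M \<rho>" "polar_null M \<P> \<rho>" "abs_cont M \<mu> \<rho>" and sm: "signed_measure M \<mu>"
      using ca_one[OF allP mu] by blast
    obtain K1 where K1: "AE x in toM M \<rho>. \<bar>f x\<bar> \<le> K1" using Linf_AE[OF f r(1,2)] by blast
    obtain K2 where K2: "AE x in toM M \<rho>. \<bar>g x\<bar> \<le> K2" using Linf_AE[OF g r(1,2)] by blast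
    obtain h where h: "has_dens M \<rho> \<mu> h" using dens_exists[OF sm r(1,3)] by blast
    have ae: "AE x in toM M \<rho>. f x = g x" by (rule qs_AE[OF q r(1,2)])
    have m: "(\<lambda>x. h x * f x) \<in> borel_measurable M" "(\<lambda>x. h x * g x) \<in> borel_measurable M"
      using h Linf_meas[OF f] Linf_meas[OF g] unfolding has_dens_def by auto
    show "Phi M f \<mu> = Phi M g \<mu>"
      unfolding Phi_dens(1)[OF sm r(1,3) h Linf_meas[OF f] K1] Phi_dens(1)[OF sm r(1,3) h Linf_meas[OF g] K2]
      by (rule integral_cong_AE) (use m ae in auto)
  qed
next
  assume eq: "\<forall>\<mu>\<in>ca M (mconv \<P>). Phi M f \<mu> = Phi M g \<mu>"
  have fm[measurable]: "f \<in> borel_measurable M" and gm[measurable]: "g \<in> borel_measurable M"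
    using Linf_meas f g by auto
  define Dp where "Dp = {x \<in> space M. g x < f x}"
  define Dn where "Dn = {x \<in> space M. f x < g x}"
  have D[measurable]: "Dp \<in> sets M" "Dn \<in> sets M" unfolding Dp_def Dn_def by measurable
  have z: "P D = 0" if P: "P \<in> \<P>" and D: "D \<in> sets M" and pos: "\<And>x. x \<in> D \<Longrightarrow> 0 < u x"
    and u: "u = (\<lambda>x. f x - g x) \<or> u = (\<lambda>x. g x - f x)" for P D u
  proof -
    have pP: "pm M P" using allP P prob_pm by blast
    note Tf = test_measure[OF allP P D f] and Tg = test_measure[OF allP P D g]
    have e: "(\<integral>x. indicator D x * f x \<partial>toM M P) = (\<integral>x. indicator D x * g x \<partial>toM M P)"
      using eq Tf(1) Tf(2) Tg(2) by metis
    have i1: "integrable (toM M P) (\<lambda>x. indicator D x * (f x - g x))"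
      using Tf(3) Tg(3) by (simp add: right_diff_distrib)
    have i2: "integrable (toM M P) (\<lambda>x. indicator D x * (g x - f x))"
      using Tf(3) Tg(3) by (simp add: right_diff_distrib)
    have v1: "(\<integral>x. indicator D x * (f x - g x) \<partial>toM M P) = 0"
      using e Tf(3) Tg(3) by (simp add: right_diff_distrib)
    have v2: "(\<integral>x. indicator D x * (g x - f x) \<partial>toM M P) = 0"
      using e Tf(3) Tg(3) by (simp add: right_diff_distrib)
    show ?thesis using u
    proof
      assume "u = (\<lambda>x. f x - g x)"
      thus ?thesis using int_zero_null[OF pP D _ i1 _] pos v1 by simp
    next
      assume "u = (\<lambda>x. g x - f x)"
      thus ?thesis using int_zero_null[OF pP D _ i2 _] pos v2 by simp
    qed
  qed
  have zp: "\<forall>P\<in>\<P>. P Dp = 0" using z[OF _ D(1), of _ "\<lambda>x. f x - g x"] by (auto simp: Dp_def)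
  moreover have zn: "\<forall>P\<in>\<P>. P Dn = 0" using z[OF _ D(2), of _ "\<lambda>x. g x - f x"] by (auto simp: Dn_def)
  moreover have "\<forall>P\<in>\<P>. P (Dp \<union> Dn) = 0"
  proof
    fix P assume P: "P \<in> \<P>"
    have pP: "pm M P" using allP P prob_pm by blast
    have "Dp \<inter> Dn = {}" by (auto simp: Dp_def Dn_def)
    moreover have "P Dp = 0" "P Dn = 0" using zp zn P by auto
    ultimately show "P (Dp \<union> Dn) = 0" using sm_add[OF pm_sm[OF pP] D] by simp
  qed
  moreover have "{x \<in> space M. \<not> f x = g x} \<subseteq> Dp \<union> Dn" by (auto simp: Dp_def Dn_def)
  ultimately show "qs M \<P> (\<lambda>x. f x = g x)" unfolding qs_def using D by blast
qed


lemma int_ind_const: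
  assumes pP: "pm M P" and D: "D \<in> sets M" and fi: "integrable (toM M P) (\<lambda>x. indicator D x * f x)"
  shows "integrable (toM M P) (\<lambda>x. indicator D x * (f x - k))"
    "(\<integral>x. indicator D x * (f x - k) \<partial>toM M P) = (\<integral>x. indicator D x * f x \<partial>toM M P) - k * P D"
    "integrable (toM M P) (\<lambda>x. indicator D x * (k - f x))"
    "(\<integral>x. indicator D x * (k - f x) \<partial>toM M P) = k * P D - (\<integral>x. indicator D x * f x \<partial>toM M P)"
proof -
  have ii: "integrable (toM M P) (\<lambda>x. indicator D x * k :: real)"
    using finite_measure.emeasure_finite[OF finite_measure_toM[OF pP]] D
    by (intro integrable_mult_left) (simp add: less_top)
  have iv: "(\<integral>x. indicator D x * k \<partial>toM M P) = k * P D"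
    using measure_toM[OF pP] D by (simp add: Int_absorb2 sets.sets_into_space)
  show "integrable (toM M P) (\<lambda>x. indicator D x * (f x - k))"
    using fi ii by (simp add: right_diff_distrib)
  show "(\<integral>x. indicator D x * (f x - k) \<partial>toM M P) = (\<integral>x. indicator D x * f x \<partial>toM M P) - k * P D"
    using fi ii iv by (simp add: right_diff_distrib)
  show "integrable (toM M P) (\<lambda>x. indicator D x * (k - f x))"
    using fi ii by (simp add: right_diff_distrib)
  show "(\<integral>x. indicator D x * (k - f x) \<partial>toM M P) = k * P D - (\<integral>x. indicator D x * f x \<partial>toM M P)"
    using fi ii iv by (simp add: right_diff_distrib)
qed

lemma C5:
  assumes allP: "\<forall>P\<in>\<P>. prob_measure M P" and f: "f \<in> Linf M \<P>"
  shows "dual_norm M (mconv \<P>) (Phi M f) = Linf_norm M \<P> f"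
proof -
  define S1 where "S1 = {C. 0 < C \<and> qs M \<P> (\<lambda>x. \<bar>f x\<bar> \<le> C)}"
  define S2 where "S2 = {C. 0 \<le> C \<and> (\<forall>\<mu>\<in>ca M (mconv \<P>). \<bar>Phi M f \<mu>\<bar> \<le> C * tv_norm M \<mu>)}"
  have fm[measurable]: "f \<in> borel_measurable M" using Linf_meas[OF f] .
  have sub: "S1 \<subseteq> S2" unfolding S1_def S2_def using Linf_bound[OF allP f] by auto
  obtain K where K: "qs M \<P> (\<lambda>x. \<bar>f x\<bar> \<le> K)" using f unfolding Linf_def by blast
  have "max K 0 + 1 \<in> S1" using K unfolding S1_def qs_def by force
  hence ne1: "S1 \<noteq> {}" by blast
  have ne2: "S2 \<noteq> {}" using ne1 sub by blast
  have b1: "bdd_below S1" unfolding S1_def bdd_below_def by (intro exI[of _ 0]) auto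
  have b2: "bdd_below S2" unfolding S2_def bdd_below_def by (intro exI[of _ 0]) auto
  have le1: "Inf S2 \<le> Inf S1" by (rule cInf_superset_mono[OF ne1 b2 sub])
  have key: "c + e \<in> S1" if c: "c \<in> S2" and e: "0 < e" for c e
  proof -
    have c0: "0 \<le> c" and cb: "\<And>\<mu>. \<mu> \<in> ca M (mconv \<P>) \<Longrightarrow> \<bar>Phi M f \<mu>\<bar> \<le> c * tv_norm M \<mu>"
      using c unfolding S2_def by auto
    define Dp where "Dp = {x \<in> space M. c + e < f x}"
    define Dn where "Dn = {x \<in> space M. f x < - (c + e)}"
    have D[measurable]: "Dp \<in> sets M" "Dn \<in> sets M" unfolding Dp_def Dn_def by measurable
    have zp: "P Dp = 0" if P: "P \<in> \<P>" for P
    proof -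
      have pP: "pm M P" using allP P prob_pm by blast
      note T = test_measure[OF allP P D(1) f]
      note I = int_ind_const[OF pP D(1) T(3), of "c + e"]
      have "Phi M f (dfun M P (indicator Dp)) \<le> c * P Dp"
        using cb[OF T(1)] T(4) c0 by (meson abs_ge_self mult_left_mono order_trans)
      hence "(\<integral>x. indicator Dp x * (f x - (c + e)) \<partial>toM M P) \<le> 0"
        unfolding I(2) using T(2) mult_nonneg_nonneg[OF less_imp_le[OF e] pm_nonneg[OF pP, of Dp]]
        by (simp add: algebra_simps)
      thus ?thesis using int_zero_null[where u="\<lambda>x. f x - (c + e)", OF pP D(1) _ I(1)] by (auto simp: Dp_def)
    qed
    have zn: "P Dn = 0" if P: "P \<in> \<P>" for P
    proof -
      have pP: "pm M P" using allP P prob_pm by blast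
      note T = test_measure[OF allP P D(2) f]
      note I = int_ind_const[OF pP D(2) T(3), of "- (c + e)"]
      have "- Phi M f (dfun M P (indicator Dn)) \<le> c * P Dn"
        using cb[OF T(1)] T(4) c0 by (meson abs_ge_minus_self mult_left_mono order_trans)
      hence "(\<integral>x. indicator Dn x * (- (c + e) - f x) \<partial>toM M P) \<le> 0"
        unfolding I(4) using T(2) mult_nonneg_nonneg[OF less_imp_le[OF e] pm_nonneg[OF pP, of Dn]]
        by (simp add: algebra_simps)
      thus ?thesis using int_zero_null[where u="\<lambda>x. - (c + e) - f x", OF pP D(2) _ I(3)] by (auto simp: Dn_def)
    qed
    have "\<forall>P\<in>\<P>. P (Dp \<union> Dn) = 0"
    proof
      fix P assume P: "P \<in> \<P>"
      have pP: "pm M P" using allP P prob_pm by blast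
      have "Dp \<inter> Dn = {}" using c0 e by (auto simp: Dp_def Dn_def)
      thus "P (Dp \<union> Dn) = 0" using sm_add[OF pm_sm[OF pP] D] zp[OF P] zn[OF P] by simp
    qed
    moreover have "{x \<in> space M. \<not> \<bar>f x\<bar> \<le> c + e} \<subseteq> Dp \<union> Dn" by (auto simp: Dp_def Dn_def)
    ultimately have "qs M \<P> (\<lambda>x. \<bar>f x\<bar> \<le> c + e)" unfolding qs_def using D by blast
    thus ?thesis unfolding S1_def using c0 e by simp
  qed
  have le2: "Inf S1 \<le> Inf S2"
  proof (rule cInf_greatest[OF ne2])
    fix c assume c: "c \<in> S2"
    show "Inf S1 \<le> c"
    proof (rule field_le_epsilon)
      fix e :: real assume "0 < e"
      thus "Inf S1 \<le> c + e" using key[OF c] by (intro cInf_lower b1)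
    qed
  qed
  have "dual_norm M (mconv \<P>) (Phi M f) = Inf S2" unfolding dual_norm_def S2_def by simp
  moreover have "Linf_norm M \<P> f = Inf S1" unfolding Linf_norm_def S1_def by simp
  ultimately show ?thesis using le1 le2 by simp
qed


lemma glue:
  fixes M :: "'a measure" and \<Q> :: "('a set \<Rightarrow> real) set" and S :: "('a set \<Rightarrow> real) \<Rightarrow> 'a set"
    and g :: "('a set \<Rightarrow> real) \<Rightarrow> 'a \<Rightarrow> real" and C :: real
  assumes pQ: "\<forall>Q\<in>\<Q>. pm M Q"
    and Ss: "\<forall>Q\<in>\<Q>. S Q \<in> sets M"
    and delta: "\<forall>Q\<in>\<Q>. \<forall>R\<in>\<Q>. Q (S R) = (if Q = R then 1 else 0)"
    and loc: "\<forall>E. (\<forall>Q\<in>\<Q>. E Q \<in> sets M \<and> E Q \<subseteq> S Q) \<longrightarrow>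
          (\<exists>S'\<in>sets M. (\<forall>Q\<in>\<Q>. Q (E Q - S') = 0) \<and>
             (\<forall>F\<in>sets M. (\<forall>Q\<in>\<Q>. Q (E Q - F) = 0) \<longrightarrow> (\<forall>Q\<in>\<Q>. Q (S' - F) = 0)))"
    and gm: "\<forall>Q\<in>\<Q>. g Q \<in> borel_measurable M"
    and gb: "\<forall>Q\<in>\<Q>. \<forall>x. \<bar>g Q x\<bar> \<le> C"
    and C: "0 \<le> C"
  shows "\<exists>f. f \<in> borel_measurable M \<and> (\<forall>x. \<bar>f x\<bar> \<le> C) \<and>
     (\<forall>Q\<in>\<Q>. AE x in toM M Q. x \<in> S Q \<longrightarrow> f x = g Q x)"
proof -
  define E where "E r Q = S Q \<inter> {x \<in> space M. r < g Q x}" for r :: real and Q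
  have Es: "E r Q \<in> sets M" "E r Q \<subseteq> S Q" if "Q \<in> \<Q>" for r Q
    using that gm Ss unfolding E_def by auto
  define P where "P r S' \<longleftrightarrow> S' \<in> sets M \<and> (\<forall>Q\<in>\<Q>. Q (E r Q - S') = 0) \<and>
             (\<forall>F\<in>sets M. (\<forall>Q\<in>\<Q>. Q (E r Q - F) = 0) \<longrightarrow> (\<forall>Q\<in>\<Q>. Q (S' - F) = 0))" for r S'
  have "\<exists>S'. P r S'" for r
    using loc[rule_format, of "E r"] Es unfolding P_def by blast
  then obtain SS where SS: "\<And>r. P r (SS r)" by metis
  have SSs: "SS r \<in> sets M" for r using SS unfolding P_def by auto
  have key: "AE x in toM M Q. x \<in> S Q \<longrightarrow> (x \<in> SS r \<longleftrightarrow> r < g Q x)" if Q: "Q \<in> \<Q>" for Q r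
  proof -
    have pq: "pm M Q" using pQ Q by auto
    have "Q (E r Q - SS r) = 0" using SS[of r] Q unfolding P_def by auto
    hence n1: "E r Q - SS r \<in> null_sets (toM M Q)" using null_toM[OF pq] Es[OF Q] SSs by auto
    define F where "F = space M - (S Q - E r Q)"
    have F: "F \<in> sets M" unfolding F_def using Es[OF Q] Ss Q by auto
    have "Q' (E r Q' - F) = 0" if Q': "Q' \<in> \<Q>" for Q'
    proof (cases "Q' = Q")
      case True
      hence "E r Q' - F = {}" unfolding F_def E_def by auto
      moreover have "pm M Q'" using pQ Q' by auto
      ultimately show ?thesis using sm_empty[OF pm_sm] by metis
    next
      case False
      have pq': "pm M Q'" using pQ Q' by auto
      have sub: "E r Q' - F \<subseteq> S Q" unfolding F_def E_def by auto
      have "E r Q' - F \<in> sets M" using Es[OF Q'] F by auto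
      hence "Q' (E r Q' - F) \<le> Q' (S Q)" using pm_mono[OF pq' _ _ sub] Ss Q by auto
      moreover have "Q' (S Q) = 0" using delta Q Q' False by auto
      ultimately show ?thesis using pm_nonneg[OF pq', of "E r Q' - F"] by simp
    qed
    hence "Q (SS r - F) = 0" using SS[of r] F Q unfolding P_def by auto
    hence n2: "SS r - F \<in> null_sets (toM M Q)" using null_toM[OF pq] SSs F by auto
    have a1: "AE x in toM M Q. x \<notin> E r Q - SS r" using AE_not_in[OF n1] .
    have a2: "AE x in toM M Q. x \<notin> SS r - F" using AE_not_in[OF n2] .
    have a3: "AE x in toM M Q. x \<in> space M" using AE_space[of "toM M Q"] by simp
    show ?thesis using a1 a2 a3 by eventually_elim (auto simp: E_def F_def)
  qed
  have keyQ: "AE x in toM M Q. \<forall>r\<in>\<rat>. x \<in> S Q \<longrightarrow> (x \<in> SS r \<longleftrightarrow> r < g Q x)" if Q: "Q \<in> \<Q>" for Q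
    by (rule AE_ball_countable') (use key[OF Q] countable_rat in auto)
  define I where "I = \<rat> \<inter> {-C..C}"
  have cI: "countable I" unfolding I_def using countable_rat by auto
  have I0: "0 \<in> I" unfolding I_def using C by auto
  define phi where "phi r x = (if x \<in> SS r then r else - C)" for r x
  define f where "f x = (SUP r\<in>I. phi r x)" for x
  have phib: "phi r x \<le> C" if "r \<in> I" for r x using that C unfolding phi_def I_def by auto
  have bdd: "bdd_above ((\<lambda>r. phi r x) ` I)" for x using phib by (auto intro!: bdd_aboveI)
  have fm: "f \<in> borel_measurable M" unfolding f_def
  proof (rule borel_measurable_cSUP[OF cI])
    fix r assume "r \<in> I" show "phi r \<in> borel_measurable M" unfolding phi_def using SSs[of r] by measurable
  qed (use bdd in auto)
  have fge: "phi r x \<le> f x" if "r \<in> I" for r x unfolding f_def by (rule cSUP_upper[OF that bdd])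
  have fle: "f x \<le> C" for x unfolding f_def using I0 phib by (intro cSUP_least) auto
  have flow: "- C \<le> f x" for x using fge[OF I0, of x] C unfolding phi_def by (auto split: if_splits)
  have fb: "\<forall>x. \<bar>f x\<bar> \<le> C"
  proof
    fix x show "\<bar>f x\<bar> \<le> C" using fle[of x] flow[of x] by (simp add: abs_le_iff)
  qed
  have good: "f x = y" if rr: "\<forall>r\<in>\<rat>. (x \<in> SS r \<longleftrightarrow> r < y)" and y: "\<bar>y\<bar> \<le> C" for x y
  proof (rule antisym)
    show "f x \<le> y" unfolding f_def
    proof (rule cSUP_least)
      show "I \<noteq> {}" using I0 by auto
      fix r assume r: "r \<in> I"
      show "phi r x \<le> y" using rr r y unfolding phi_def I_def by (auto simp: abs_le_iff)
    qed
    show "y \<le> f x"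
    proof (rule ccontr)
      assume "\<not> y \<le> f x"
      hence lt: "max (f x) (- C) < y" using flow[of x] by simp
      then obtain r where r: "r \<in> \<rat>" "max (f x) (- C) < r" "r < y" using Rats_dense_in_real by blast
      have rI: "r \<in> I" unfolding I_def using r y by (auto simp: abs_le_iff)
      have "x \<in> SS r" using rr r by auto
      hence "r \<le> f x" using fge[OF rI, of x] unfolding phi_def by simp
      thus False using r by simp
    qed
  qed
  have "AE x in toM M Q. x \<in> S Q \<longrightarrow> f x = g Q x" if Q: "Q \<in> \<Q>" for Q
    using keyQ[OF Q] by eventually_elim (use good gb Q in auto)
  thus ?thesis using fm fb by blast
qed


definition restr :: "'a measure \<Rightarrow> ('a set \<Rightarrow> real) \<Rightarrow> 'a set \<Rightarrow> 'a set \<Rightarrow> real" where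
  "restr M \<mu> D B = (if B \<in> sets M then \<mu> (D \<inter> B) else 0)"

lemma restr_sm:
  assumes sm: "signed_measure M \<mu>" and D: "D \<in> sets M"
  shows "signed_measure M (restr M \<mu> D)"
  unfolding signed_measure_def
proof safe
  fix A assume "A \<notin> sets M" thus "restr M \<mu> D A = 0" by (simp add: restr_def)
next
  fix A :: "nat \<Rightarrow> 'a set" assume disj: "disjoint_family A" and As: "range A \<subseteq> sets M"
  have "disjoint_family (\<lambda>n. D \<inter> A n)" using disj unfolding disjoint_family_on_def by auto
  moreover have "range (\<lambda>n. D \<inter> A n) \<subseteq> sets M" using As D by auto
  ultimately have "(\<lambda>n. \<mu> (D \<inter> A n)) sums \<mu> (\<Union>n. D \<inter> A n)" by (rule sm_countable[OF sm])
  moreover have "(\<Union>n. D \<inter> A n) = D \<inter> (\<Union>n. A n)" by auto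
  moreover have "(\<Union>n. A n) \<in> sets M" using As by auto
  ultimately show "(\<lambda>n. restr M \<mu> D (A n)) sums restr M \<mu> D (\<Union> (range A))"
    using As by (auto simp: restr_def)
qed

lemma restr_pm:
  assumes "pm M \<rho>" "D \<in> sets M"
  shows "pm M (restr M \<rho> D)"
  using restr_sm[OF pm_sm[OF assms(1)] assms(2)] pm_nonneg[OF assms(1)] unfolding pm_def restr_def by auto

lemma jnull:
  assumes sm: "signed_measure M \<mu>" and Z: "Z \<in> sets M" and n: "\<And>B. B \<in> sets M \<Longrightarrow> B \<subseteq> Z \<Longrightarrow> \<mu> B = 0"
  shows "jpr M \<mu> Z = 0" "jnr M \<mu> Z = 0"
proof -
  have "jp M \<mu> Z \<le> 0" using n by (intro jp_le[OF sm]) auto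
  hence "jp M \<mu> Z = 0" using jp_nonneg[OF sm, of Z] by simp
  thus "jpr M \<mu> Z = 0" "jnr M \<mu> Z = 0" using Z n[OF Z] by (auto simp: jpr_def jnr_def)
qed


lemma vanish:
  fixes L :: "('a set \<Rightarrow> real) \<Rightarrow> real" and D :: "nat \<Rightarrow> 'a set"
  assumes sm: "signed_measure M \<mu>"
    and closed: "\<And>E. E \<in> sets M \<Longrightarrow> restr M \<mu> E \<in> \<C>"
    and lin: "\<And>\<nu>1 \<nu>2. \<nu>1 \<in> \<C> \<Longrightarrow> \<nu>2 \<in> \<C> \<Longrightarrow> L (\<lambda>A. \<nu>1 A + \<nu>2 A) = L \<nu>1 + L \<nu>2"
    and bnd: "\<And>\<nu>. \<nu> \<in> \<C> \<Longrightarrow> \<bar>L \<nu>\<bar> \<le> K * tv_norm M \<nu>" and K: "0 \<le> K"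
    and Ds: "\<And>k. D k \<in> sets M" and disj: "disjoint_family D"
    and zk: "\<And>k. L (restr M \<mu> (D k)) = 0"
    and Zn: "\<And>B. B \<in> sets M \<Longrightarrow> B \<subseteq> space M - (\<Union>k. D k) \<Longrightarrow> \<mu> B = 0"
  shows "L \<mu> = 0"
proof -
  define E where "E m = space M - (\<Union>k<m. D k)" for m
  have Es: "E m \<in> sets M" for m unfolding E_def using Ds by auto
  have r0: "restr M \<mu> (E 0) = \<mu>"
  proof
    fix B
    have E0: "E 0 = space M" by (simp add: E_def)
    show "restr M \<mu> (E 0) B = \<mu> B"
    proof (cases "B \<in> sets M")
      case True
      hence "space M \<inter> B = B" using sets.sets_into_space by blast
      thus ?thesis using True E0 by (simp add: restr_def)
    next
      case False thus ?thesis using sm_out[OF sm False] by (simp add: restr_def)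
    qed
  qed
  have step: "restr M \<mu> (E m) = (\<lambda>A. restr M \<mu> (E (Suc m)) A + restr M \<mu> (D m) A)" for m
  proof
    fix A show "restr M \<mu> (E m) A = restr M \<mu> (E (Suc m)) A + restr M \<mu> (D m) A"
    proof (cases "A \<in> sets M")
      case True
      have Dm: "D m \<subseteq> E m" unfolding E_def
      proof
        fix x assume x: "x \<in> D m"
        have "x \<in> space M" using x Ds[of m] sets.sets_into_space by blast
        moreover have "x \<notin> (\<Union>k<m. D k)"
        proof
          assume "x \<in> (\<Union>k<m. D k)"
          then obtain k where k: "k < m" "x \<in> D k" by blast
          have "D k \<inter> D m = {}" using disj k(1) unfolding disjoint_family_on_def by simp
          thus False using x k(2) by blast
        qed
        ultimately show "x \<in> space M - (\<Union>k<m. D k)" by blast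
      qed
      have U: "(\<Union>k<Suc m. D k) = (\<Union>k<m. D k) \<union> D m" by (simp add: lessThan_Suc Un_commute)
      have ES: "E (Suc m) = E m - D m" unfolding E_def U by blast
      have "E m \<inter> A = (E (Suc m) \<inter> A) \<union> (D m \<inter> A)" using Dm unfolding ES by blast
      moreover have "(E (Suc m) \<inter> A) \<inter> (D m \<inter> A) = {}" unfolding ES by blast
      ultimately have "\<mu> (E m \<inter> A) = \<mu> (E (Suc m) \<inter> A) + \<mu> (D m \<inter> A)"
        using sm_add[OF sm, of "E (Suc m) \<inter> A" "D m \<inter> A"] Es Ds True by auto
      thus ?thesis using True by (simp add: restr_def)
    qed (simp add: restr_def)
  qed
  have Lm: "L \<mu> = L (restr M \<mu> (E m))" for m
  proof (induction m)
    case 0 thus ?case using r0 by simp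
  next
    case (Suc m)
    have "L (restr M \<mu> (E m)) = L (restr M \<mu> (E (Suc m))) + L (restr M \<mu> (D m))"
      unfolding step[of m] by (rule lin[OF closed[OF Es] closed[OF Ds]])
    thus ?case using Suc zk by simp
  qed
  define \<nu> where "\<nu> A = jpr M \<mu> A + jnr M \<mu> A" for A
  have pn: "pm M \<nu>" unfolding \<nu>_def by (intro pm_add pm_jpr pm_jnr sm)
  have tvb: "tv_norm M (restr M \<mu> (E m)) \<le> \<nu> (E m)" for m
  proof -
    have "tv_norm M (restr M \<mu> (E m)) \<le> restr M \<nu> (E m) (space M)"
    proof (rule tv_le[OF restr_pm[OF pn Es]])
      fix B assume "B \<in> sets M"
      thus "\<bar>restr M \<mu> (E m) B\<bar> \<le> restr M \<nu> (E m) B" using jabs[OF sm] by (simp add: restr_def \<nu>_def)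
    qed
    also have "\<dots> = \<nu> (E m)" using Es[of m] sets.sets_into_space[of "E m" M] by (simp add: restr_def Int_absorb2)
    finally show ?thesis .
  qed
  have Eval: "\<nu> (E m) = \<nu> (space M) - (\<Sum>k<m. \<nu> (D k))" for m
  proof -
    have "\<nu> (E m) = \<nu> (space M) - \<nu> (\<Union>k<m. D k)"
      unfolding E_def using Ds sets.sets_into_space by (intro sm_diff[OF pm_sm[OF pn]]) auto
    thus ?thesis using sm_finite_union[OF pm_sm[OF pn] Ds disj] by simp
  qed
  have "(\<lambda>k. \<nu> (D k)) sums \<nu> (\<Union>k. D k)" using Ds disj by (intro sm_countable[OF pm_sm[OF pn]]) auto
  hence "(\<lambda>m. \<nu> (space M) - (\<Sum>k<m. \<nu> (D k))) \<longlonglongrightarrow> \<nu> (space M) - \<nu> (\<Union>k. D k)"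
    unfolding sums_def by (intro tendsto_intros)
  moreover have "\<nu> (space M) - \<nu> (\<Union>k. D k) = \<nu> (space M - (\<Union>k. D k))"
    using Ds sets.sets_into_space by (intro sm_diff[OF pm_sm[OF pn], symmetric]) auto
  moreover have "\<nu> (space M - (\<Union>k. D k)) = 0"
  proof -
    have Zs: "space M - (\<Union>k. D k) \<in> sets M" using Ds by (intro sets.Diff sets.top sets.countable_UN) auto
    show ?thesis using jnull[OF sm Zs Zn] unfolding \<nu>_def by simp
  qed
  ultimately have "(\<lambda>m. \<nu> (E m)) \<longlonglongrightarrow> 0" using Eval by simp
  hence lim: "(\<lambda>m. K * \<nu> (E m)) \<longlonglongrightarrow> 0" using tendsto_mult_right_zero by blast
  have "\<bar>L \<mu>\<bar> \<le> K * \<nu> (E m)" for m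
  proof -
    have "\<bar>L \<mu>\<bar> \<le> K * tv_norm M (restr M \<mu> (E m))" using Lm[of m] bnd[OF closed[OF Es[of m]]] by simp
    also have "\<dots> \<le> K * \<nu> (E m)" by (rule mult_left_mono[OF tvb K])
    finally show ?thesis .
  qed
  hence "\<bar>L \<mu>\<bar> \<le> 0" using LIMSEQ_le_const[OF lim] by blast
  thus ?thesis by simp
qed


lemma abs_cont_trans: "abs_cont M \<mu> Q \<Longrightarrow> abs_cont M Q P \<Longrightarrow> abs_cont M \<mu> P"
  unfolding abs_cont_def by blast

lemma ca_of_Q:
  assumes "signed_measure M \<mu>" "abs_cont M \<mu> Q" "P \<in> \<P>" "abs_cont M Q P"
  shows "\<mu> \<in> ca M (mconv \<P>)"
  unfolding ca_def using assms abs_cont_trans P_in_mconv by blast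

lemma rep_Q:
  assumes linL: "\<forall>\<mu>\<in>ca M (mconv \<P>). \<forall>\<nu>\<in>ca M (mconv \<P>). \<forall>a b. \<Lambda> (\<lambda>A. a * \<mu> A + b * \<nu> A) = a * \<Lambda> \<mu> + b * \<Lambda> \<nu>"
    and Cb: "\<forall>\<mu>\<in>ca M (mconv \<P>). \<bar>\<Lambda> \<mu>\<bar> \<le> C * tv_norm M \<mu>" and C: "0 \<le> C"
    and pq: "pm M Q" and P: "P \<in> \<P>" and QP: "abs_cont M Q P"
  shows "\<exists>g. g \<in> borel_measurable M \<and> (\<forall>x. \<bar>g x\<bar> \<le> C) \<and>
   (\<forall>h. h \<in> borel_measurable M \<longrightarrow> integrable (toM M Q) h \<longrightarrow> \<Lambda> (dfun M Q h) = (\<integral>x. g x * h x \<partial>toM M Q))"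
proof -
  have inca: "dfun M Q h \<in> ca M (mconv \<P>)" if "h \<in> borel_measurable M" "integrable (toM M Q) h" for h
    by (rule ca_of_Q[OF dfun_sm[OF pq that] dfun_ac[OF pq that] P QP])
  show ?thesis
  proof (rule rep[OF pq C])
    fix h1 h2 :: "'a \<Rightarrow> real" and a b :: real
    assume "h1 \<in> borel_measurable M" "integrable (toM M Q) h1" "h2 \<in> borel_measurable M" "integrable (toM M Q) h2"
    thus "\<Lambda> (\<lambda>A. a * dfun M Q h1 A + b * dfun M Q h2 A) = a * \<Lambda> (dfun M Q h1) + b * \<Lambda> (dfun M Q h2)"
      using linL inca by blast
  next
    fix h :: "'a \<Rightarrow> real" assume "h \<in> borel_measurable M" "integrable (toM M Q) h"
    thus "\<bar>\<Lambda> (dfun M Q h)\<bar> \<le> C * tv_norm M (dfun M Q h)" using Cb inca by blast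
  qed
qed


lemma C4:
  assumes allP: "\<forall>P\<in>\<P>. prob_measure M P" and hl: "hahn_localizable M \<P>"
    and Ld: "ca_dual M (mconv \<P>) \<Lambda>"
  shows "\<exists>f\<in>Linf M \<P>. \<forall>\<mu>\<in>ca M (mconv \<P>). \<Lambda> \<mu> = Phi M f \<mu>"
proof -
  obtain \<Q> S where Qp: "\<forall>Q\<in>\<Q>. prob_measure M Q" and Ss: "\<forall>Q\<in>\<Q>. S Q \<in> sets M"
    and delta: "\<forall>Q\<in>\<Q>. \<forall>R\<in>\<Q>. Q (S R) = (if Q = R then 1 else 0)"
    and dQP: "dominated M \<Q> \<P>" and dPS: "dominated M \<P> (sconv \<Q>)"
    and loc: "\<forall>E. (\<forall>Q\<in>\<Q>. E Q \<in> sets M \<and> E Q \<subseteq> S Q) \<longrightarrow>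
          (\<exists>S'\<in>sets M. (\<forall>Q\<in>\<Q>. Q (E Q - S') = 0) \<and>
             (\<forall>F\<in>sets M. (\<forall>Q\<in>\<Q>. Q (E Q - F) = 0) \<longrightarrow> (\<forall>Q\<in>\<Q>. Q (S' - F) = 0)))"
    using hl unfolding hahn_localizable_def by blast
  have pQ: "\<forall>Q\<in>\<Q>. pm M Q" using Qp prob_pm by blast
  have linL: "\<forall>\<mu>\<in>ca M (mconv \<P>). \<forall>\<nu>\<in>ca M (mconv \<P>). \<forall>a b. \<Lambda> (\<lambda>A. a * \<mu> A + b * \<nu> A) = a * \<Lambda> \<mu> + b * \<Lambda> \<nu>"
    using Ld unfolding ca_dual_def by blast
  obtain C0 where C0: "\<forall>\<mu>\<in>ca M (mconv \<P>). \<bar>\<Lambda> \<mu>\<bar> \<le> C0 * tv_norm M \<mu>"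
    using Ld unfolding ca_dual_def by blast
  define C where "C = max C0 0"
  have Cnn: "0 \<le> C" unfolding C_def by simp
  have Cb: "\<forall>\<mu>\<in>ca M (mconv \<P>). \<bar>\<Lambda> \<mu>\<bar> \<le> C * tv_norm M \<mu>"
  proof
    fix \<mu> assume mu: "\<mu> \<in> ca M (mconv \<P>)"
    hence sm: "signed_measure M \<mu>" unfolding ca_def by auto
    have "0 \<le> tv_norm M \<mu>" by (rule tv_nonneg[OF tv_jordan(2)[OF sm]])
    hence "C0 * tv_norm M \<mu> \<le> C * tv_norm M \<mu>" unfolding C_def by (intro mult_right_mono) auto
    thus "\<bar>\<Lambda> \<mu>\<bar> \<le> C * tv_norm M \<mu>" using C0 mu by force
  qed
  have "\<forall>Q\<in>\<Q>. \<exists>g. g \<in> borel_measurable M \<and> (\<forall>x. \<bar>g x\<bar> \<le> C) \<and>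
   (\<forall>h. h \<in> borel_measurable M \<longrightarrow> integrable (toM M Q) h \<longrightarrow> \<Lambda> (dfun M Q h) = (\<integral>x. g x * h x \<partial>toM M Q))"
  proof
    fix Q assume Q: "Q \<in> \<Q>"
    then obtain P where P: "P \<in> \<P>" "abs_cont M Q P" using dQP unfolding dominated_def by blast
    show "\<exists>g. g \<in> borel_measurable M \<and> (\<forall>x. \<bar>g x\<bar> \<le> C) \<and>
     (\<forall>h. h \<in> borel_measurable M \<longrightarrow> integrable (toM M Q) h \<longrightarrow> \<Lambda> (dfun M Q h) = (\<integral>x. g x * h x \<partial>toM M Q))"
      by (rule rep_Q[OF linL Cb Cnn _ P]) (use pQ Q in auto)
  qed
  then obtain g where g: "\<forall>Q\<in>\<Q>. g Q \<in> borel_measurable M \<and> (\<forall>x. \<bar>g Q x\<bar> \<le> C) \<and>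
   (\<forall>h. h \<in> borel_measurable M \<longrightarrow> integrable (toM M Q) h \<longrightarrow> \<Lambda> (dfun M Q h) = (\<integral>x. g Q x * h x \<partial>toM M Q))"
    by (metis bchoice)
  obtain f where fm[measurable]: "f \<in> borel_measurable M" and fb: "\<forall>x. \<bar>f x\<bar> \<le> C"
    and fg: "\<forall>Q\<in>\<Q>. AE x in toM M Q. x \<in> S Q \<longrightarrow> f x = g Q x"
    using glue[OF pQ Ss delta loc _ _ Cnn, of g] g by blast
  have fq: "qs M \<P> (\<lambda>x. \<bar>f x\<bar> \<le> C)"
    unfolding qs_def using fb allP sm_empty[OF pm_sm[OF prob_pm]] by (intro bexI[of _ "{}"]) auto
  have fL: "f \<in> Linf M \<P>" unfolding Linf_def using fm fq by blast
  show ?thesis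
  proof (intro bexI[OF _ fL] ballI)
    fix \<mu> assume mu: "\<mu> \<in> ca M (mconv \<P>)"
    have sm: "signed_measure M \<mu>" using mu unfolding ca_def by auto
    obtain R where R: "R \<in> mconv \<P>" "abs_cont M \<mu> R" using mu unfolding ca_def by blast
    obtain n c p where Rd: "R = (\<lambda>A. \<Sum>i<(n::nat). c i * p i A)" and cp: "\<forall>i<n. 0 \<le> c i \<and> p i \<in> \<P>"
      and csum: "(\<Sum>i<n. c i) = 1"
      using R(1) unfolding mconv_def by blast
    have n0: "n \<noteq> 0" using csum by (cases n) auto
    have "\<forall>i\<in>{..<n}. \<exists>dq. (\<forall>j. 0 \<le> fst dq j \<and> snd dq j \<in> \<Q>) \<and> fst dq sums 1 \<and>
        abs_cont M (p i) (\<lambda>A. \<Sum>j. fst dq j * snd dq j A)"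
    proof
      fix i assume "i \<in> {..<n}"
      hence "p i \<in> \<P>" using cp by auto
      then obtain T where T: "T \<in> sconv \<Q>" "abs_cont M (p i) T" using dPS unfolding dominated_def by blast
      then obtain d q where "T = (\<lambda>A. \<Sum>j. d j * q j A)" "\<forall>j. 0 \<le> d j \<and> q j \<in> \<Q>" "d sums 1"
        unfolding sconv_def by blast
      thus "\<exists>dq. (\<forall>j. 0 \<le> fst dq j \<and> snd dq j \<in> \<Q>) \<and> fst dq sums 1 \<and>
        abs_cont M (p i) (\<lambda>A. \<Sum>j. fst dq j * snd dq j A)"
        using T(2) by (intro exI[of _ "(d, q)"]) auto
    qed
    from bchoice[OF this] obtain dq where dq: "\<forall>i\<in>{..<n}. (\<forall>j. 0 \<le> fst (dq i) j \<and> snd (dq i) j \<in> \<Q>) \<and> fst (dq i) sums 1 \<and>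
        abs_cont M (p i) (\<lambda>A. \<Sum>j. fst (dq i) j * snd (dq i) j A)"
      by blast
    define q where "q i j = snd (dq i) j" for i j
    define d where "d i j = fst (dq i) j" for i j
    define Q' where "Q' = (\<lambda>(i, j). q i j) ` ({..<n} \<times> (UNIV :: nat set))"
    have Q'Q: "Q' \<subseteq> \<Q>"
    proof
      fix Q assume "Q \<in> Q'"
      then obtain i j where "i < n" "Q = q i j" unfolding Q'_def by auto
      thus "Q \<in> \<Q>" using dq unfolding q_def by auto
    qed
    have cQ': "countable Q'" unfolding Q'_def by auto
    have neQ': "Q' \<noteq> {}" unfolding Q'_def using n0 by auto
    have null': "\<mu> B = 0" if A: "A \<in> sets M" "\<forall>Q\<in>Q'. Q A = 0" and B: "B \<in> sets M" "B \<subseteq> A" for A B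
    proof -
      have "p i A = 0" if i: "i < n" for i
      proof -
        have "q i j \<in> Q'" for j unfolding Q'_def using i by (intro image_eqI[of _ _ "(i, j)"]) auto
        hence "(\<lambda>j. d i j * q i j A) = (\<lambda>j. 0)" using A(2) by (simp add: fun_eq_iff)
        hence "(\<Sum>j. fst (dq i) j * snd (dq i) j A) = 0" unfolding d_def q_def by simp
        thus ?thesis using dq i A(1) unfolding abs_cont_def by blast
      qed
      hence "R A = 0" unfolding Rd by simp
      thus ?thesis using R(2) A(1) B unfolding abs_cont_def by blast
    qed
    define qq where "qq = from_nat_into Q'"
    have qqQ': "qq k \<in> Q'" for k unfolding qq_def by (rule from_nat_into[OF neQ'])
    have qqQ: "qq k \<in> \<Q>" for k using qqQ' Q'Q by auto
    have rqq: "range qq = Q'" unfolding qq_def by (rule range_from_nat_into[OF neQ' cQ'])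
    define D where "D = disjointed (\<lambda>k. S (qq k))"
    have SQs: "range (\<lambda>k. S (qq k)) \<subseteq> sets M" using Ss qqQ by auto
    have Ds: "D k \<in> sets M" for k using sets.range_disjointed_sets[OF SQs] unfolding D_def by auto
    have disj: "disjoint_family D" unfolding D_def by (rule disjoint_family_disjointed)
    have DS: "D k \<subseteq> S (qq k)" for k unfolding D_def by (rule disjointed_subset)
    have UD: "(\<Union>k. D k) = (\<Union>k. S (qq k))" unfolding D_def by (rule UN_disjointed_eq)
    have Zn: "\<mu> B = 0" if B: "B \<in> sets M" "B \<subseteq> space M - (\<Union>k. D k)" for B
    proof (rule null'[OF B(1) _ B(1) order_refl], rule ballI)
      fix Q assume "Q \<in> Q'"
      then obtain m where m: "Q = qq m" using rqq by blast
      have pq: "pm M Q" using pQ qqQ m by auto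
      have "B \<subseteq> space M - S Q" using B(2) UD m by blast
      hence "Q B \<le> Q (space M - S Q)" using pm_mono[OF pq B(1)] Ss qqQ m by auto
      also have "\<dots> = Q (space M) - Q (S Q)"
      proof -
        have SQ: "S Q \<in> sets M" using Ss qqQ m by auto
        show ?thesis by (rule sm_diff[OF pm_sm[OF pq] sets.top SQ sets.sets_into_space[OF SQ]])
      qed
      also have "\<dots> = 0"
      proof -
        have "Q \<in> \<Q>" using qqQ m by auto
        hence "Q (space M) = 1" "Q (S Q) = 1" using Qp delta unfolding prob_measure_def by auto
        thus ?thesis by simp
      qed
      finally show "Q B = 0" using pm_nonneg[OF pq, of B] by simp
    qed
    have Rp: "pm M R" using mconv_pm[OF allP R(1)] by simp
    have closed: "restr M \<mu> E \<in> ca M (mconv \<P>)" if E: "E \<in> sets M" for E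
    proof -
      have "abs_cont M (restr M \<mu> E) R"
        using R(2) E unfolding abs_cont_def restr_def by (metis Int_lower2 order_trans sets.Int)
      thus ?thesis unfolding ca_def using restr_sm[OF sm E] R(1) by blast
    qed
    have zk: "\<Lambda> (restr M \<mu> (D k)) - Phi M f (restr M \<mu> (D k)) = 0" for k
    proof -
      define Q where "Q = qq k"
      have Q: "Q \<in> \<Q>" "Q \<in> Q'" unfolding Q_def using qqQ qqQ' by auto
      have pq: "pm M Q" using pQ Q by auto
      define mk where "mk = restr M \<mu> (D k)"
      have smk: "signed_measure M mk" unfolding mk_def by (rule restr_sm[OF sm Ds])
      have ack: "abs_cont M mk Q" unfolding abs_cont_def
      proof safe
        fix A B assume A: "A \<in> sets M" "Q A = 0" and B: "B \<in> sets M" "B \<subseteq> A"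
        have "\<mu> (D k \<inter> B) = 0"
        proof (rule null'[OF _ _ _ order_refl])
          show DB: "D k \<inter> B \<in> sets M" using Ds B by auto
          show "\<forall>Q''\<in>Q'. Q'' (D k \<inter> B) = 0"
          proof
            fix Q'' assume Q'': "Q'' \<in> Q'"
            have pq'': "pm M Q''" using pQ Q'' Q'Q by auto
            show "Q'' (D k \<inter> B) = 0"
            proof (cases "Q'' = Q")
              case True
              have "Q (D k \<inter> B) \<le> Q A" using pm_mono[OF pq DB A(1)] B by auto
              thus ?thesis using True A(2) pm_nonneg[OF pq, of "D k \<inter> B"] by simp
            next
              case False
              have "Q'' (D k \<inter> B) \<le> Q'' (S Q)" using pm_mono[OF pq'' DB] Ss Q DS[of k] unfolding Q_def by auto
              moreover have "Q'' (S Q) = 0"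
              proof -
                have "Q'' \<in> \<Q>" using Q'' Q'Q by auto
                hence "Q'' (S Q) = (if Q'' = Q then 1 else 0)" using delta Q(1) by blast
                thus ?thesis using False by simp
              qed
              ultimately show ?thesis using pm_nonneg[OF pq'', of "D k \<inter> B"] by simp
            qed
          qed
        qed (use Ds B in auto)
        thus "mk B = 0" unfolding mk_def restr_def by simp
      qed
      obtain P where P: "P \<in> \<P>" "abs_cont M Q P" using dQP Q unfolding dominated_def by blast
      obtain h where hd: "has_dens M Q mk h" using dens_exists[OF smk pq ack] by blast
      have hm[measurable]: "h \<in> borel_measurable M" and hi: "integrable (toM M Q) h"
        using hd unfolding has_dens_def by auto
      have mk_eq: "mk = dfun M Q h"
      proof
        fix B show "mk B = dfun M Q h B"
          using hd sm_out[OF smk, of B] unfolding has_dens_def dfun_def by auto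
      qed
      have L1: "\<Lambda> mk = (\<integral>x. g Q x * h x \<partial>toM M Q)" using g Q(1) hm hi mk_eq by auto
      have fAE: "AE x in toM M Q. \<bar>f x\<bar> \<le> C" using fb by simp
      have L2: "Phi M f mk = (\<integral>x. h x * f x \<partial>toM M Q)" by (rule Phi_dens(1)[OF smk pq ack hd fm fAE])
      have hd2: "has_dens M Q mk (\<lambda>x. h x * indicator (D k) x)"
        unfolding has_dens_def
      proof (intro conjI ballI)
        show "(\<lambda>x. h x * indicator (D k) x) \<in> borel_measurable M" using Ds by measurable
        show "integrable (toM M Q) (\<lambda>x. h x * indicator (D k) x)" using hi Ds by (intro integrable_real_mult_indicator) auto
        fix B assume B: "B \<in> sets M"
        have "(\<integral>x. h x * indicator (D k) x * indicator B x \<partial>toM M Q) = (\<integral>x. h x * indicator (D k \<inter> B) x \<partial>toM M Q)"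
          by (rule Bochner_Integration.integral_cong) (auto simp: indicator_def)
        also have "\<dots> = mk (D k \<inter> B)" using hd Ds B unfolding has_dens_def by auto
        also have "\<dots> = mk B" using Ds B by (simp add: mk_def restr_def Int_assoc)
        finally show "mk B = (\<integral>x. h x * indicator (D k) x * indicator B x \<partial>toM M Q)" by simp
      qed
      have ae1: "AE x in toM M Q. h x = h x * indicator (D k) x" by (rule dens_unique[OF hd hd2])
      have ae2: "AE x in toM M Q. x \<in> S Q \<longrightarrow> f x = g Q x" using fg Q(1) by auto
      have ae: "AE x in toM M Q. g Q x * h x = h x * f x"
        using ae1 ae2
      proof eventually_elim
        case (elim x)
        show ?case
        proof (cases "x \<in> D k")
          case True thus ?thesis using elim DS[of k] unfolding Q_def by auto
        next
          case False thus ?thesis using elim by simp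
        qed
      qed
      have gQm: "g Q \<in> borel_measurable M" using g Q(1) by auto
      have "(\<integral>x. g Q x * h x \<partial>toM M Q) = (\<integral>x. h x * f x \<partial>toM M Q)"
        by (rule integral_cong_AE) (use ae gQm in auto)
      thus ?thesis using L1 L2 unfolding mk_def by simp
    qed
    have "\<Lambda> \<mu> - Phi M f \<mu> = 0"
    proof (rule vanish[OF sm closed, where L="\<lambda>\<nu>. \<Lambda> \<nu> - Phi M f \<nu>" and K="C + C"])
      fix \<nu>1 \<nu>2 assume n1: "\<nu>1 \<in> ca M (mconv \<P>)" and n2: "\<nu>2 \<in> ca M (mconv \<P>)"
      have "\<Lambda> (\<lambda>A. 1 * \<nu>1 A + 1 * \<nu>2 A) = 1 * \<Lambda> \<nu>1 + 1 * \<Lambda> \<nu>2" using linL n1 n2 by blast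
      moreover have "Phi M f (\<lambda>A. 1 * \<nu>1 A + 1 * \<nu>2 A) = 1 * Phi M f \<nu>1 + 1 * Phi M f \<nu>2"
        by (rule C1_lin[OF allP fL n1 n2])
      ultimately show "\<Lambda> (\<lambda>A. \<nu>1 A + \<nu>2 A) - Phi M f (\<lambda>A. \<nu>1 A + \<nu>2 A) =
          (\<Lambda> \<nu>1 - Phi M f \<nu>1) + (\<Lambda> \<nu>2 - Phi M f \<nu>2)" by simp
    next
      fix \<nu> assume n: "\<nu> \<in> ca M (mconv \<P>)"
      have "\<bar>\<Lambda> \<nu>\<bar> \<le> C * tv_norm M \<nu>" using Cb n by blast
      moreover have "\<bar>Phi M f \<nu>\<bar> \<le> C * tv_norm M \<nu>" by (rule Linf_bound[OF allP fL fq Cnn n])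
      ultimately show "\<bar>\<Lambda> \<nu> - Phi M f \<nu>\<bar> \<le> (C + C) * tv_norm M \<nu>" by (simp add: distrib_right)
    next
      show "0 \<le> C + C" using Cnn by simp
    qed (use Ds disj zk Zn in auto)
    thus "\<Lambda> \<mu> = Phi M f \<mu>" by simp
  qed
qed


theorem corollary3p5:
  fixes M :: "'a measure" and \<P> :: "('a set \<Rightarrow> real) set"
  assumes "\<forall>P\<in>\<P>. prob_measure M P"
    and "hahn_localizable M \<P>"
  shows "\<exists>\<Phi> :: ('a \<Rightarrow> real) \<Rightarrow> ('a set \<Rightarrow> real) \<Rightarrow> real.
     (\<forall>f\<in>Linf M \<P>. ca_dual M (mconv \<P>) (\<Phi> f)) \<and>
     (\<forall>f\<in>Linf M \<P>. \<forall>g\<in>Linf M \<P>. \<forall>a b. \<forall>\<mu>\<in>ca M (mconv \<P>).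
        \<Phi> (\<lambda>x. a * f x + b * g x) \<mu> = a * \<Phi> f \<mu> + b * \<Phi> g \<mu>) \<and>
     (\<forall>f\<in>Linf M \<P>. \<forall>g\<in>Linf M \<P>.
        (\<forall>\<mu>\<in>ca M (mconv \<P>). \<Phi> f \<mu> = \<Phi> g \<mu>) \<longleftrightarrow> qs M \<P> (\<lambda>x. f x = g x)) \<and>
     (\<forall>\<Lambda>. ca_dual M (mconv \<P>) \<Lambda> \<longrightarrow> (\<exists>f\<in>Linf M \<P>. \<forall>\<mu>\<in>ca M (mconv \<P>). \<Lambda> \<mu> = \<Phi> f \<mu>)) \<and>
     (\<forall>f\<in>Linf M \<P>. dual_norm M (mconv \<P>) (\<Phi> f) = Linf_norm M \<P> f)"
proof (intro exI[of _ "Phi M"] conjI)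
  show "\<forall>f\<in>Linf M \<P>. ca_dual M (mconv \<P>) (Phi M f)" using C1[OF assms(1)] by blast
  show "\<forall>f\<in>Linf M \<P>. \<forall>g\<in>Linf M \<P>. \<forall>a b. \<forall>\<mu>\<in>ca M (mconv \<P>).
        Phi M (\<lambda>x. a * f x + b * g x) \<mu> = a * Phi M f \<mu> + b * Phi M g \<mu>"
    using C2[OF assms(1)] by blast
  show "\<forall>f\<in>Linf M \<P>. \<forall>g\<in>Linf M \<P>.
        (\<forall>\<mu>\<in>ca M (mconv \<P>). Phi M f \<mu> = Phi M g \<mu>) \<longleftrightarrow> qs M \<P> (\<lambda>x. f x = g x)"
    using C3[OF assms(1)] by blast
  show "\<forall>\<Lambda>. ca_dual M (mconv \<P>) \<Lambda> \<longrightarrow> (\<exists>f\<in>Linf M \<P>. \<forall>\<mu>\<in>ca M (mconv \<P>). \<Lambda> \<mu> = Phi M f \<mu>)"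
    using C4[OF assms(1,2)] by blast
  show "\<forall>f\<in>Linf M \<P>. dual_norm M (mconv \<P>) (Phi M f) = Linf_norm M \<P> f"
    using C5[OF assms(1)] by blast
qed

end
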